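(* Let $G$ be a graph, let $V(G)=V_1\cup V_2$ be a partition of its vertex set, and let $X\subseteq V_1$ be the vertex boundary of $V_2$ in $G$. Let $H$ be a connected graph with $|H|\ge|V_2|$ and let $G':=(G[V_1],X)\vee H$. Let $M\in S(G)$ and let $\sigma'$ be a multiset of $|H|-|V_2|$ real numbers such that the multiset $\sigma(M[V_2])\cup\sigma'$ is generically realisable for $H$. Then there exists $N\in S(G')$ with spectrum $\sigma(N)=\sigma(M)\cup\sigma'$ (union of multisets).
   Context: $S(G)$ is the set of real symmetric matrices indexed by $V(G)$ whose $(i,j)$ off-diagonal entry is nonzero iff $\{i,j\}\in E(G)$ (diagonal unrestricted). $G[W]$ is the subgraph induced on $W$ and $M[W]$ the principal submatrix of $M$ with rows and columns in $W$; $\sigma(\cdot)$ is the spectrum as a multiset. The vertex boundary of $W\subseteq V(G)$ is the set of vertices in $V(G)\setminus W$ adjacent in $G$ to some vertex of $W$. For disjoint graphs $G_1,G_2$ and $U_1\subseteq V(G_1)$, the partial join $(G_1,U_1)\vee G_2$ is $G_1\cup G_2$ together with all edges joining each vertex of $U_1$ to each vertex of $G_2$. For a connected graph $H$ of order $n$, a multiset $\sigma$ of $n$ reals is generically realisable for $H$ if for every finite set $\mathcal Y\subseteq\mathbb{R}^n\setminus\{\mathbf 0\}$ there is a real orthogonal matrix $U$ with $UDU^\top\in S(H)$, $D$ a fixed diagonal matrix with spectrum $\sigma$, such that $U\mathbf y$ has no zero entry for all $\mathbf y\in\mathcal Y$. *)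

theory Defs
  imports "HOL-Computational_Algebra.Polynomial" "HOL-Combinatorics.Permutations"
begin

type_synonym 'a graph = "'a set \<times> ('a \<Rightarrow> 'a \<Rightarrow> bool)"

definition verts :: "'a graph \<Rightarrow> 'a set" where "verts G = fst G"
definition adj :: "'a graph \<Rightarrow> 'a \<Rightarrow> 'a \<Rightarrow> bool" where "adj G = snd G"

definition graph :: "'a graph \<Rightarrow> bool" where
  "graph G \<longleftrightarrow> finite (verts G) \<and>
     (\<forall>x y. adj G x y \<longrightarrow> x \<in> verts G \<and> y \<in> verts G \<and> x \<noteq> y \<and> adj G y x)"

definition connected_graph :: "'a graph \<Rightarrow> bool" where
  "connected_graph G \<longleftrightarrow> graph G \<and> verts G \<noteq> {} \<and>
     (\<forall>x\<in>verts G. \<forall>y\<in>verts G. (adj G)\<^sup>*\<^sup>* x y)"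

definition induced :: "'a graph \<Rightarrow> 'a set \<Rightarrow> 'a graph" where
  "induced G W = (verts G \<inter> W, \<lambda>x y. x \<in> W \<and> y \<in> W \<and> adj G x y)"

definition vertex_boundary :: "'a graph \<Rightarrow> 'a set \<Rightarrow> 'a set" where
  "vertex_boundary G W = {v \<in> verts G - W. \<exists>w\<in>W. adj G v w}"

definition partial_join :: "'a graph \<Rightarrow> 'a set \<Rightarrow> 'b graph \<Rightarrow> ('a + 'b) graph" where
  "partial_join G1 U1 G2 =
    (Inl ` verts G1 \<union> Inr ` verts G2,
     \<lambda>x y. (case (x, y) of
              (Inl a, Inl b) \<Rightarrow> adj G1 a b
            | (Inr a, Inr b) \<Rightarrow> adj G2 a b
            | (Inl a, Inr b) \<Rightarrow> a \<in> U1 \<and> a \<in> verts G1 \<and> b \<in> verts G2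
            | (Inr a, Inl b) \<Rightarrow> b \<in> U1 \<and> b \<in> verts G1 \<and> a \<in> verts G2))"

text \<open>Matrices indexed by a finite set I are functions I \<Rightarrow> I \<Rightarrow> real,
  required to vanish outside I \<times> I.\<close>
type_synonym 'a rmat = "'a \<Rightarrow> 'a \<Rightarrow> real"

definition S_set :: "'a graph \<Rightarrow> 'a rmat set" ("S'(_')") where
  "S_set G = {M. (\<forall>i j. (i \<notin> verts G \<or> j \<notin> verts G) \<longrightarrow> M i j = 0) \<and>
      (\<forall>i\<in>verts G. \<forall>j\<in>verts G. M i j = M j i) \<and>
      (\<forall>i\<in>verts G. \<forall>j\<in>verts G. i \<noteq> j \<longrightarrow> (M i j \<noteq> 0 \<longleftrightarrow> adj G i j))}"

definition submatrix :: "'a rmat \<Rightarrow> 'a set \<Rightarrow> 'a rmat" where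
  "submatrix M W = (\<lambda>i j. if i \<in> W \<and> j \<in> W then M i j else 0)"

definition charpoly :: "'a set \<Rightarrow> 'a rmat \<Rightarrow> real poly" where
  "charpoly I M = (\<Sum>p | p permutes I. of_int (sign p) *
      (\<Prod>i\<in>I. (if p i = i then [:- M i i, 1:] else [:- M i (p i):])))"

text \<open>Spectrum as a multiset: the real roots of the characteristic polynomial with
  algebraic multiplicity (for real symmetric matrices these are all eigenvalues).\<close>
definition spectrum :: "'a set \<Rightarrow> 'a rmat \<Rightarrow> real multiset" where
  "spectrum I M = proots (charpoly I M)"

definition orthogonal_on :: "'a set \<Rightarrow> 'a rmat \<Rightarrow> bool" where
  "orthogonal_on I U \<longleftrightarrow> (\<forall>i j. (i \<notin> I \<or> j \<notin> I) \<longrightarrow> U i j = 0) \<and>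
     (\<forall>i\<in>I. \<forall>j\<in>I. (\<Sum>k\<in>I. U i k * U j k) = (if i = j then 1 else 0))"

definition conj_diag :: "'a set \<Rightarrow> 'a rmat \<Rightarrow> ('a \<Rightarrow> real) \<Rightarrow> 'a rmat" where
  "conj_diag I U d = (\<lambda>i j. if i \<in> I \<and> j \<in> I then (\<Sum>k\<in>I. U i k * d k * U j k) else 0)"

definition mat_vec :: "'a set \<Rightarrow> 'a rmat \<Rightarrow> ('a \<Rightarrow> real) \<Rightarrow> ('a \<Rightarrow> real)" where
  "mat_vec I U y = (\<lambda>i. \<Sum>k\<in>I. U i k * y k)"

definition generically_realisable :: "real multiset \<Rightarrow> 'a graph \<Rightarrow> bool" where
  "generically_realisable \<sigma> H \<longleftrightarrow> connected_graph H \<and>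
     (\<exists>d. image_mset d (mset_set (verts H)) = \<sigma> \<and>
       (\<forall>Y. finite Y \<and>
            (\<forall>y\<in>Y. (\<forall>i. i \<notin> verts H \<longrightarrow> y i = 0) \<and> (\<exists>i\<in>verts H. y i \<noteq> 0)) \<longrightarrow>
          (\<exists>U. orthogonal_on (verts H) U \<and> conj_diag (verts H) U d \<in> S(H) \<and>
               (\<forall>y\<in>Y. \<forall>i\<in>verts H. mat_vec (verts H) U y i \<noteq> 0))))"

end

theory Submission
  imports Defs "Jordan_Normal_Form.Char_Poly" "HOL-Computational_Algebra.Fundamental_Theorem_Algebra"
begin

definition tomat :: "nat \<Rightarrow> (nat \<Rightarrow> 'i) \<Rightarrow> 'i rmat \<Rightarrow> real mat" where
  "tomat n f A = mat n n (\<lambda>(i,j). A (f i) (f j))"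

lemma tomat_carrier[simp]: "tomat n f A \<in> carrier_mat n n"
  by (simp add: tomat_def)

lemma tomat_index[simp]: "i < n \<Longrightarrow> j < n \<Longrightarrow> tomat n f A $$ (i,j) = A (f i) (f j)"
  by (simp add: tomat_def)

lemma cpm_tomat: "i < n \<Longrightarrow> j < n \<Longrightarrow> char_poly_matrix (tomat n f A) $$ (i,j) =
   (if i = j then [:- A (f i) (f j), 1:] else [:- A (f i) (f j):])"
  by (simp add: char_poly_matrix_def tomat_def)

lemma charpoly_bridge:
  assumes f: "bij_betw f {..<n} I"
  shows "charpoly I A = char_poly (tomat n f A)"
proof -
  define E where "E = (\<lambda>i j. if j = i then [:- A i i, 1:] else [:- A i j:])"
  have fin: "finite I" using f bij_betw_finite by blast
  have inj: "inj_on f {..<n}" using f by (simp add: bij_betw_def)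
  define g where "g = inv_into {..<n} f"
  have g: "bij_betw g I {..<n}" unfolding g_def by (rule bij_betw_inv_into[OF f])
  have gf: "\<And>x. x \<in> {..<n} \<Longrightarrow> g (f x) = x" unfolding g_def using inj by simp
  have fg: "\<And>x. x \<in> I \<Longrightarrow> f (g x) = x" unfolding g_def using f
    by (simp add: bij_betw_inv_into_right)
  let ?mp = "map_permutation {..<n} f"
  have "charpoly I A = (\<Sum>q | q permutes I. of_int (sign q) * (\<Prod>i\<in>I. E i (q i)))"
    unfolding charpoly_def E_def by simp
  also have "\<dots> = (\<Sum>p | p permutes {..<n}. of_int (sign (?mp p)) * (\<Prod>i\<in>I. E i (?mp p i)))"
  proof (rule sum.reindex_bij_witness[of _ ?mp "map_permutation I g"])
    fix q assume "q \<in> {q. q permutes I}"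
    then have q: "q permutes I" by simp
    show "?mp (map_permutation I g q) = q"
      by (rule map_permutation_compose_inv[OF g q fg])
    show "map_permutation I g q \<in> {p. p permutes {..<n}}"
      using map_permutation_permutes[OF g q] by simp
  next
    fix p assume "p \<in> {p. p permutes {..<n}}"
    then have p: "p permutes {..<n}" by simp
    show "map_permutation I g (?mp p) = p"
      by (rule map_permutation_compose_inv[OF f p gf])
    show "?mp p \<in> {q. q permutes I}"
      using map_permutation_permutes[OF f p] by simp
  qed (simp add: map_permutation_compose_inv[OF g _ fg])
  also have "\<dots> = (\<Sum>p | p permutes {..<n}. of_int (sign p) * (\<Prod>k<n. E (f k) (f (p k))))"
  proof (rule sum.cong[OF refl])
    fix p assume "p \<in> {p. p permutes {..<n}}"
    then have p: "p permutes {..<n}" by simp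
    have s: "sign (?mp p) = sign p"
      by (rule sign_map_permutation[OF inj p]) simp
    have "(\<Prod>i\<in>I. E i (?mp p i)) = (\<Prod>k\<in>{..<n}. E (f k) (?mp p (f k)))"
      by (rule prod.reindex_bij_betw[OF f, symmetric])
    also have "\<dots> = (\<Prod>k<n. E (f k) (f (p k)))"
      by (rule prod.cong[OF refl]) (simp add: map_permutation_apply[OF inj])
    finally show "of_int (sign (?mp p)) * (\<Prod>i\<in>I. E i (?mp p i)) =
        of_int (sign p) * (\<Prod>k<n. E (f k) (f (p k)))" using s by simp
  qed
  also have "\<dots> = char_poly (tomat n f A)"
  proof -
    have "char_poly (tomat n f A) = (\<Sum>p | p permutes {0..<n}.
          of_int (sign p) * (\<Prod>i = 0..<n. char_poly_matrix (tomat n f A) $$ (i, p i)))"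
    proof -
      have d: "dim_row (char_poly_matrix (tomat n f A)) = n" "dim_col (char_poly_matrix (tomat n f A)) = n"
        by (simp_all add: char_poly_matrix_def tomat_def)
      show ?thesis unfolding char_poly_def det_def by (simp only: d simp_thms if_True)
    qed
    also have "\<dots> = (\<Sum>p | p permutes {..<n}. of_int (sign p) * (\<Prod>k<n. E (f k) (f (p k))))"
    proof (rule sum.cong)
      show "{p. p permutes {0..<n}} = {p. p permutes {..<n}}" by (simp add: atLeast0LessThan)
    next
      fix p assume "p \<in> {p. p permutes {..<n}}"
      then have p: "p permutes {..<n}" by simp
      have pk: "\<And>k. k < n \<Longrightarrow> p k < n" using p permutes_in_image by fastforce
      have fe: "\<And>k. k < n \<Longrightarrow> (f (p k) = f k) = (p k = k)"
        using inj pk by (auto simp: inj_on_def)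
      show "of_int (sign p) * (\<Prod>i = 0..<n. char_poly_matrix (tomat n f A) $$ (i, p i)) =
          of_int (sign p) * (\<Prod>k<n. E (f k) (f (p k)))"
        unfolding atLeast0LessThan
        by (rule arg_cong[where f="\<lambda>x. _ * x"], rule prod.cong[OF refl])
           (auto simp: cpm_tomat E_def pk fe)
    qed
    finally show ?thesis by simp
  qed
  finally show ?thesis .
qed


lemma complex_eigen_nat:
  fixes a :: "nat \<Rightarrow> nat \<Rightarrow> real"
  assumes n: "n > 0"
  shows "\<exists>c z. (\<exists>k<n. c k \<noteq> 0) \<and> (\<forall>i<n. (\<Sum>k<n. complex_of_real (a i k) * c k) = z * c i)"
proof -
  define Ac where "Ac = mat n n (\<lambda>(i,j). complex_of_real (a i j))"
  have Ac: "Ac \<in> carrier_mat n n" unfolding Ac_def by simp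
  have "degree (char_poly Ac) = n" using degree_monic_char_poly[OF Ac] by simp
  then have "\<not> constant (poly (char_poly Ac))" using n by (simp add: constant_degree)
  then obtain z where "poly (char_poly Ac) z = 0" using fundamental_theorem_of_algebra by blast
  then have "eigenvalue Ac z" using eigenvalue_root_char_poly[OF Ac] by simp
  then obtain v where ev: "eigenvector Ac v z" unfolding eigenvalue_def by blast
  then have v: "v \<in> carrier_vec n" "v \<noteq> 0\<^sub>v n" "Ac *\<^sub>v v = z \<cdot>\<^sub>v v"
    unfolding eigenvector_def using Ac by auto
  have nz: "\<exists>k<n. v $ k \<noteq> 0"
  proof (rule ccontr)
    assume "\<not> ?thesis"
    then have "v = 0\<^sub>v n" using v(1) by (intro eq_vecI) auto
    then show False using v(2) by simp
  qed
  have eq: "(\<Sum>k<n. complex_of_real (a i k) * v $ k) = z * v $ i" if i: "i < n" for i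
  proof -
    have "(Ac *\<^sub>v v) $ i = (z \<cdot>\<^sub>v v) $ i" using v(3) by simp
    also have "(z \<cdot>\<^sub>v v) $ i = z * v $ i" using i v(1) by simp
    also have "(Ac *\<^sub>v v) $ i = row Ac i \<bullet> v" using i Ac by simp
    also have "\<dots> = (\<Sum>k<n. complex_of_real (a i k) * v $ k)"
      unfolding scalar_prod_def using v(1) i by (auto simp: Ac_def atLeast0LessThan intro!: sum.cong)
    finally show ?thesis .
  qed
  show ?thesis
    by (rule exI[of _ "\<lambda>k. v $ k"], rule exI[of _ z]) (use nz eq in auto)
qed

lemma real_sym_eigen_nat:
  fixes a :: "nat \<Rightarrow> nat \<Rightarrow> real"
  assumes n: "n > 0" and sym: "\<And>i j. i < n \<Longrightarrow> j < n \<Longrightarrow> a i j = a j i"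
  shows "\<exists>u \<mu>. (\<exists>k<n. u k \<noteq> 0) \<and> (\<forall>i<n. (\<Sum>k<n. a i k * u k) = \<mu> * u i)"
proof -
  obtain c z where nz: "\<exists>k<n. c k \<noteq> 0"
    and eq: "\<And>i. i < n \<Longrightarrow> (\<Sum>k<n. complex_of_real (a i k) * c k) = z * c i"
    using complex_eigen_nat[OF n, of a] by blast
  define S where "S = (\<Sum>i<n. cnj (c i) * (\<Sum>k<n. complex_of_real (a i k) * c k))"
  define R where "R = (\<Sum>i<n. (cmod (c i))^2)"
  have Rpos: "R > 0"
  proof -
    obtain k where k: "k < n" "c k \<noteq> 0" using nz by blast
    have "(cmod (c k))^2 \<le> R" unfolding R_def
      by (rule member_le_sum) (use k in auto)
    moreover have "(cmod (c k))^2 > 0" using k by simp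
    ultimately show ?thesis by linarith
  qed
  have S1: "S = z * complex_of_real R"
  proof -
    have "S = (\<Sum>i<n. cnj (c i) * (z * c i))" unfolding S_def by (rule sum.cong) (auto simp: eq)
    also have "\<dots> = z * (\<Sum>i<n. cnj (c i) * c i)" by (simp add: sum_distrib_left algebra_simps)
    also have "(\<Sum>i<n. cnj (c i) * c i) = complex_of_real R"
      unfolding R_def of_real_sum by (rule sum.cong[OF refl], subst complex_norm_square, simp add: mult.commute)
    finally show ?thesis .
  qed
  have S2: "cnj S = S"
  proof -
    have "S = (\<Sum>i<n. \<Sum>k<n. complex_of_real (a i k) * (cnj (c i) * c k))"
      unfolding S_def by (simp add: sum_distrib_left algebra_simps)
    moreover have "cnj S = (\<Sum>i<n. \<Sum>k<n. complex_of_real (a i k) * (c i * cnj (c k)))"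
      unfolding S_def by (simp add: sum_distrib_left algebra_simps)
    moreover have "(\<Sum>i<n. \<Sum>k<n. complex_of_real (a i k) * (c i * cnj (c k))) =
                   (\<Sum>k<n. \<Sum>i<n. complex_of_real (a i k) * (c i * cnj (c k)))"
      by (rule sum.swap)
    moreover have "\<dots> = (\<Sum>i<n. \<Sum>k<n. complex_of_real (a i k) * (cnj (c i) * c k))"
      by (intro sum.cong refl) (simp add: sym mult.commute)
    ultimately show ?thesis by simp
  qed
  have zr: "Im z = 0"
  proof -
    have "Im S = 0" using S2 by (metis complex_cnj_zero_iff complex_eq_iff cnj.simps(2) neg_equal_zero)
    then have "Im z * R = 0" using S1 by simp
    then show ?thesis using Rpos by simp
  qed
  define \<mu> where "\<mu> = Re z"
  have z: "z = complex_of_real \<mu>" using zr unfolding \<mu>_def by (simp add: complex_eq_iff)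
  have re: "(\<Sum>k<n. a i k * Re (c k)) = \<mu> * Re (c i)" if "i < n" for i
  proof -
    have "Re (\<Sum>k<n. complex_of_real (a i k) * c k) = Re (z * c i)" using eq[OF that] by simp
    then show ?thesis by (simp add: z Re_sum)
  qed
  have im: "(\<Sum>k<n. a i k * Im (c k)) = \<mu> * Im (c i)" if "i < n" for i
  proof -
    have "Im (\<Sum>k<n. complex_of_real (a i k) * c k) = Im (z * c i)" using eq[OF that] by simp
    then show ?thesis by (simp add: z Im_sum)
  qed
  obtain k where k: "k < n" "c k \<noteq> 0" using nz by blast
  show ?thesis
  proof (cases "Re (c k) = 0")
    case True
    then have "Im (c k) \<noteq> 0" using k by (simp add: complex_eq_iff)
    then show ?thesis using im k by (intro exI[of _ "\<lambda>k. Im (c k)"] exI[of _ \<mu>]) auto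
  next
    case False
    then show ?thesis using re k by (intro exI[of _ "\<lambda>k. Re (c k)"] exI[of _ \<mu>]) auto
  qed
qed


definition mm :: "'i set \<Rightarrow> 'i rmat \<Rightarrow> 'i rmat \<Rightarrow> 'i rmat" where
  "mm I A B = (\<lambda>i j. if i \<in> I \<and> j \<in> I then (\<Sum>k\<in>I. A i k * B k j) else 0)"
definition idm :: "'i set \<Rightarrow> 'i rmat" where
  "idm I = (\<lambda>i j. if i \<in> I \<and> i = j then 1 else 0)"
definition tp :: "'i rmat \<Rightarrow> 'i rmat" where
  "tp A = (\<lambda>i j. A j i)"
definition onI :: "'i set \<Rightarrow> 'i rmat \<Rightarrow> bool" where
  "onI I A \<longleftrightarrow> (\<forall>i j. i \<notin> I \<or> j \<notin> I \<longrightarrow> A i j = 0)"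
definition dg :: "'i set \<Rightarrow> ('i \<Rightarrow> real) \<Rightarrow> 'i rmat" where
  "dg I d = (\<lambda>i j. if i \<in> I \<and> i = j then d i else 0)"

lemma onI_mm[simp]: "onI I (mm I A B)" by (simp add: onI_def mm_def)
lemma onI_idm[simp]: "onI I (idm I)" by (simp add: onI_def idm_def)
lemma onI_dg[simp]: "onI I (dg I d)" by (simp add: onI_def dg_def)
lemma onI_tp[simp]: "onI I (tp A) = onI I A" by (auto simp: onI_def tp_def)
lemma tp_tp[simp]: "tp (tp A) = A" by (simp add: tp_def)
lemma tp_idm[simp]: "tp (idm I) = idm I" by (auto simp: tp_def idm_def fun_eq_iff)
lemma tp_dg[simp]: "tp (dg I d) = dg I d" by (auto simp: tp_def dg_def fun_eq_iff)

lemma onI_out: "onI I A \<Longrightarrow> i \<notin> I \<or> j \<notin> I \<Longrightarrow> A i j = 0" by (auto simp: onI_def)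

lemma tp_mm: "tp (mm I A B) = mm I (tp B) (tp A)"
  by (auto simp: tp_def mm_def fun_eq_iff mult.commute)

lemma mm_assoc: assumes "finite I" shows "mm I (mm I A B) C = mm I A (mm I B C)"
proof -
  have "(\<Sum>k\<in>I. (\<Sum>l\<in>I. A i l * B l k) * C k j) = (\<Sum>l\<in>I. A i l * (\<Sum>k\<in>I. B l k * C k j))" for i j
  proof -
    have "(\<Sum>k\<in>I. (\<Sum>l\<in>I. A i l * B l k) * C k j) = (\<Sum>k\<in>I. \<Sum>l\<in>I. A i l * B l k * C k j)"
      by (simp add: sum_distrib_right)
    also have "\<dots> = (\<Sum>l\<in>I. \<Sum>k\<in>I. A i l * B l k * C k j)" by (rule sum.swap)
    also have "\<dots> = (\<Sum>l\<in>I. A i l * (\<Sum>k\<in>I. B l k * C k j))"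
      by (simp add: sum_distrib_left mult.assoc)
    finally show ?thesis .
  qed
  then show ?thesis by (auto simp: mm_def fun_eq_iff intro!: sum.cong)
qed

lemma mm_idm_left: assumes "onI I A" "finite I" shows "mm I (idm I) A = A"
proof -
  have "(\<Sum>k\<in>I. (if i \<in> I \<and> i = k then 1 else 0) * A k j) = A i j" if "i \<in> I" for i j
    using that assms(2) by (simp add: if_distrib[of "\<lambda>x. x * _"] cong: if_cong)
  then show ?thesis using assms by (auto simp: mm_def idm_def fun_eq_iff onI_def)
qed

lemma mm_idm_right: assumes "onI I A" "finite I" shows "mm I A (idm I) = A"
proof -
  have "(\<Sum>k\<in>I. A i k * (if k \<in> I \<and> k = j then 1 else 0)) = A i j" if "j \<in> I" for i j
    using that assms(2) by (simp add: if_distrib[of "\<lambda>x. _ * x"] cong: if_cong)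
  then show ?thesis using assms by (auto simp: mm_def idm_def fun_eq_iff onI_def)
qed

lemma mm_dg_entry: "i \<in> I \<Longrightarrow> j \<in> I \<Longrightarrow> finite I \<Longrightarrow>
   mm I (mm I U (dg I d)) (tp U) i j = (\<Sum>k\<in>I. U i k * d k * U j k)"
proof -
  assume ij: "i \<in> I" "j \<in> I" and fin: "finite I"
  have "(\<Sum>l\<in>I. U i l * (if l \<in> I \<and> l = k then d l else 0)) = U i k * d k" if "k \<in> I" for k
    using that fin by (simp add: if_distrib[of "\<lambda>x. _ * x"] cong: if_cong)
  then show ?thesis using ij by (auto simp: mm_def dg_def tp_def intro!: sum.cong)
qed

lemma conj_diag_eq: "finite I \<Longrightarrow> conj_diag I U d = mm I (mm I U (dg I d)) (tp U)"
  by (auto simp: conj_diag_def fun_eq_iff mm_dg_entry) (simp_all add: mm_def)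

lemma orthogonal_on_iff: "orthogonal_on I U \<longleftrightarrow> onI I U \<and> mm I U (tp U) = idm I"
  by (auto simp: orthogonal_on_def onI_def mm_def tp_def idm_def fun_eq_iff)

lemma dim_tomat[simp]: "dim_row (tomat n f A) = n" "dim_col (tomat n f A) = n"
  by (simp_all add: tomat_def)

lemma tomat_mm: assumes f: "bij_betw f {..<n} I"
  shows "tomat n f (mm I A B) = tomat n f A * tomat n f B"
proof (rule eq_matI)
  fix i j assume i: "i < dim_row (tomat n f A * tomat n f B)" and j: "j < dim_col (tomat n f A * tomat n f B)"
  then have i: "i < n" and j: "j < n" by auto
  have fi: "f i \<in> I" "f j \<in> I" using f i j by (auto simp: bij_betw_def)
  have "(tomat n f A * tomat n f B) $$ (i,j) = (\<Sum>k\<in>{0..<n}. A (f i) (f k) * B (f k) (f j))"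
    using i j by (simp add: scalar_prod_def)
  also have "\<dots> = (\<Sum>k\<in>I. A (f i) k * B k (f j))"
    unfolding atLeast0LessThan by (rule sum.reindex_bij_betw[OF f])
  finally show "tomat n f (mm I A B) $$ (i,j) = (tomat n f A * tomat n f B) $$ (i,j)"
    using i j fi by (simp add: mm_def)
qed auto

lemma tomat_tp: "tomat n f (tp A) = transpose_mat (tomat n f A)"
  by (rule eq_matI) (auto simp: tp_def)

lemma tomat_idm: assumes f: "bij_betw f {..<n} I" shows "tomat n f (idm I) = 1\<^sub>m n"
proof (rule eq_matI)
  fix i j assume "i < dim_row (1\<^sub>m n)" "j < dim_col (1\<^sub>m n)"
  then have i: "i < n" and j: "j < n" by auto
  have "(f i = f j) = (i = j)" using f i j by (auto simp: bij_betw_def inj_on_def)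
  then show "tomat n f (idm I) $$ (i,j) = 1\<^sub>m n $$ (i,j)"
    using i j f by (auto simp: idm_def bij_betw_def)
qed auto

lemma finite_enum: assumes "finite I" obtains f where "bij_betw f {..<card I} I"
proof -
  from ex_bij_betw_nat_finite[OF assms] obtain f where "bij_betw f {0..<card I} I" by blast
  then show ?thesis using that by (simp add: atLeast0LessThan)
qed

lemma charpoly_orth_sim:
  assumes fin: "finite I" and P: "mm I P (tp P) = idm I"
  shows "charpoly I (mm I (mm I P A) (tp P)) = charpoly I A"
proof -
  obtain f where f: "bij_betw f {..<card I} I" using finite_enum[OF fin] by blast
  define n where "n = card I"
  note f = f[folded n_def]
  define Pm where "Pm = tomat n f P"
  define Am where "Am = tomat n f A"
  have Pm: "Pm \<in> carrier_mat n n" "transpose_mat Pm \<in> carrier_mat n n" "Am \<in> carrier_mat n n"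
    by (auto simp: Pm_def Am_def)
  have PP: "Pm * transpose_mat Pm = 1\<^sub>m n"
    using arg_cong[OF P, of "tomat n f"] unfolding tomat_mm[OF f] tomat_tp tomat_idm[OF f] Pm_def .
  have PP2: "transpose_mat Pm * Pm = 1\<^sub>m n"
    using mat_mult_left_right_inverse[OF Pm(1) Pm(2) PP] .
  have eq: "tomat n f (mm I (mm I P A) (tp P)) = Pm * Am * transpose_mat Pm"
    unfolding tomat_mm[OF f] tomat_tp Pm_def Am_def ..
  have "similar_mat (Pm * Am * transpose_mat Pm) Am"
    unfolding similar_mat_def similar_mat_wit_def
    by (rule exI[of _ Pm], rule exI[of _ "transpose_mat Pm"]) (use Pm PP PP2 in \<open>auto simp: Let_def\<close>)
  then have "char_poly (Pm * Am * transpose_mat Pm) = char_poly Am" by (rule char_poly_similar)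
  then show ?thesis unfolding charpoly_bridge[OF f] eq Am_def .
qed

lemma charpoly_cong: assumes "\<And>i j. i \<in> I \<Longrightarrow> j \<in> I \<Longrightarrow> A i j = B i j"
  shows "charpoly I A = charpoly I B"
  unfolding charpoly_def
  by (intro sum.cong refl arg_cong[where f="\<lambda>x. _ * x"] prod.cong)
     (auto simp: assms permutes_in_image)

lemma charpoly_dg: assumes fin: "finite I"
  shows "charpoly I (dg I d) = (\<Prod>i\<in>I. [:- d i, 1:])"
proof -
  define F where "F = (\<lambda>p. of_int (sign p) * (\<Prod>i\<in>I. (if p i = i then [:- dg I d i i, 1:] else [:- dg I d i (p i):])))"
  have "charpoly I (dg I d) = sum F {p. p permutes I}" unfolding charpoly_def F_def ..
  also have "\<dots> = sum F {id}"
  proof (rule sum.mono_neutral_right)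
    show "finite {p. p permutes I}" using fin by (simp add: finite_permutations)
    show "{id} \<subseteq> {p. p permutes I}" by (simp add: permutes_id)
    show "\<forall>p\<in>{p. p permutes I} - {id}. F p = 0"
    proof
      fix p assume "p \<in> {p. p permutes I} - {id}"
      then have p: "p permutes I" "p \<noteq> id" by auto
      then obtain i where i: "p i \<noteq> i" by (auto simp: fun_eq_iff)
      then have "i \<in> I" using p(1) by (meson permutes_not_in)
      then have "(\<Prod>i\<in>I. if p i = i then [:- dg I d i i, 1:] else [:- dg I d i (p i):]) = 0"
        using i fin by (intro prod_zero bexI[of _ i]) (auto simp: dg_def)
      then show "F p = 0" by (simp add: F_def)
    qed
  qed
  also have "\<dots> = (\<Prod>i\<in>I. [:- d i, 1:])" by (auto simp: F_def dg_def intro!: prod.cong)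
  finally show ?thesis .
qed


lemma real_sym_eigen_set:
  fixes A :: "'i rmat"
  assumes fin: "finite I" and ne: "I \<noteq> {}" and sym: "\<And>i j. i \<in> I \<Longrightarrow> j \<in> I \<Longrightarrow> A i j = A j i"
  shows "\<exists>v \<mu>. (\<Sum>i\<in>I. (v i)^2) = 1 \<and> (\<forall>i\<in>I. (\<Sum>j\<in>I. A i j * v j) = \<mu> * v i)"
proof -
  obtain f where f: "bij_betw f {..<card I} I" using finite_enum[OF fin] by blast
  define n where "n = card I"
  note f = f[folded n_def]
  have n: "n > 0" using fin ne unfolding n_def by (simp add: card_gt_0_iff)
  have fI: "\<And>k. k < n \<Longrightarrow> f k \<in> I" using f by (auto simp: bij_betw_def)
  obtain u \<mu> where nz: "\<exists>k<n. u k \<noteq> 0" and eq: "\<And>i. i < n \<Longrightarrow> (\<Sum>k<n. A (f i) (f k) * u k) = \<mu> * u i"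
    using real_sym_eigen_nat[OF n, of "\<lambda>i j. A (f i) (f j)"] sym fI by blast
  define g where "g = inv_into {..<n} f"
  have gf: "\<And>k. k < n \<Longrightarrow> g (f k) = k" unfolding g_def using f
    by (simp add: bij_betw_def)
  have fg: "\<And>i. i \<in> I \<Longrightarrow> f (g i) = i" unfolding g_def using f by (simp add: bij_betw_inv_into_right)
  have gI: "\<And>i. i \<in> I \<Longrightarrow> g i < n" unfolding g_def using f
    by (metis bij_betw_def inv_into_into lessThan_iff)
  define v0 where "v0 = (\<lambda>i. u (g i))"
  have reix: "(\<Sum>j\<in>I. h j) = (\<Sum>k<n. h (f k))" for h :: "_ \<Rightarrow> real"
    using sum.reindex_bij_betw[OF f, of h] by simp
  define r where "r = (\<Sum>i\<in>I. (v0 i)^2)"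
  have r: "r = (\<Sum>k<n. (u k)^2)" unfolding r_def reix v0_def by (simp add: gf)
  have rpos: "r > 0"
  proof -
    obtain k where k: "k < n" "u k \<noteq> 0" using nz by blast
    have "(u k)^2 \<le> r" unfolding r by (rule member_le_sum) (use k in auto)
    moreover have "(u k)^2 > 0" using k by simp
    ultimately show ?thesis by linarith
  qed
  have ev0: "(\<Sum>j\<in>I. A i j * v0 j) = \<mu> * v0 i" if i: "i \<in> I" for i
  proof -
    have "(\<Sum>j\<in>I. A i j * v0 j) = (\<Sum>k<n. A (f (g i)) (f k) * u k)"
      unfolding reix v0_def using i by (simp add: gf fg)
    also have "\<dots> = \<mu> * u (g i)" by (rule eq[OF gI[OF i]])
    finally show ?thesis unfolding v0_def .
  qed
  define v where "v = (\<lambda>i. v0 i / sqrt r)"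
  have "(\<Sum>i\<in>I. (v i)^2) = (\<Sum>i\<in>I. (v0 i)^2) / r"
    unfolding v_def using rpos by (simp add: power_divide sum_divide_distrib)
  then have 1: "(\<Sum>i\<in>I. (v i)^2) = 1" using rpos unfolding r_def by simp
  have 2: "\<forall>i\<in>I. (\<Sum>j\<in>I. A i j * v j) = \<mu> * v i"
  proof
    fix i assume i: "i \<in> I"
    have "(\<Sum>j\<in>I. A i j * v j) = (\<Sum>j\<in>I. A i j * v0 j) / sqrt r"
      unfolding v_def by (simp add: sum_divide_distrib)
    then show "(\<Sum>j\<in>I. A i j * v j) = \<mu> * v i" using ev0[OF i] by (simp add: v_def)
  qed
  show ?thesis using 1 2 by blast
qed

lemma householder:
  assumes fin: "finite I" and x: "x \<in> I" and v: "(\<Sum>i\<in>I. (v i)^2) = 1"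
  shows "\<exists>H. onI I H \<and> tp H = H \<and> mm I H H = idm I \<and> (\<forall>i\<in>I. H i x = v i)"
proof -
  define w where "w = (\<lambda>i. v i - (if i = x then 1 else 0))"
  define c where "c = (\<Sum>i\<in>I. (w i)^2)"
  define a where "a = 2 / c"
  define H where "H = (\<lambda>i j. if i \<in> I \<and> j \<in> I then (if i = j then 1 else 0) - a * w i * w j else 0)"
  have c: "c = - 2 * w x"
  proof -
    have "c = (\<Sum>i\<in>I. (v i)^2 - 2 * (if i = x then v i else 0) + (if i = x then 1 else 0))"
      unfolding c_def w_def by (intro sum.cong refl) (auto simp: power2_eq_square algebra_simps)
    also have "\<dots> = 1 - 2 * v x + 1"
      using fin x v by (simp add: sum.distrib sum_subtractf sum_distrib_left[symmetric])
    finally show ?thesis by (simp add: w_def)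
  qed
  have a2: "a * a * c = 2 * a" unfolding a_def by (cases "c = 0") (auto simp: field_simps)
  have "onI I H" by (simp add: onI_def H_def)
  moreover have "tp H = H" by (auto simp: tp_def H_def fun_eq_iff mult.commute)
  moreover have "mm I H H = idm I"
  proof (rule ext, rule ext)
    fix i j
    show "mm I H H i j = idm I i j"
    proof (cases "i \<in> I \<and> j \<in> I")
      case True
      have "(\<Sum>k\<in>I. H i k * H k j) = (\<Sum>k\<in>I. ((if i = k then 1 else 0) - a * w i * w k) * ((if k = j then 1 else 0) - a * w k * w j))"
        using True by (intro sum.cong refl) (simp add: H_def)
      also have "\<dots> = (\<Sum>k\<in>I. (if i = k then (if k = j then 1 else 0) else 0)
          - (if i = k then a * w k * w j else 0) - (if k = j then a * w i * w k else 0)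
          + (a * a * w i * w j) * (w k)^2)"
        by (intro sum.cong refl) (auto simp: algebra_simps power2_eq_square)
      also have "\<dots> = (if i = j then 1 else 0) - a * w i * w j - a * w i * w j + (a * a * w i * w j) * c"
        using True fin unfolding c_def
        by (simp add: sum.distrib sum_subtractf sum_distrib_left[symmetric])
      also have "\<dots> = (if i = j then 1 else 0)"
      proof -
        have "(a * a * w i * w j) * c = (a * a * c) * (w i * w j)" by (simp add: algebra_simps)
        then show ?thesis using a2 by simp
      qed
      finally show ?thesis using True by (simp add: mm_def idm_def)
    next
      case False
      then show ?thesis by (auto simp: mm_def idm_def)
    qed
  qed
  moreover have "\<forall>i\<in>I. H i x = v i"
  proof
    fix i assume i: "i \<in> I"
    show "H i x = v i"
    proof (cases "c = 0")
      case True
      then have "\<forall>i\<in>I. (w i)^2 = 0" unfolding c_def using fin by (simp add: sum_nonneg_eq_0_iff)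
      then have "w i = 0" using i by simp
      then show ?thesis using i x by (simp add: H_def w_def a_def True split: if_splits)
    next
      case False
      then have "w x \<noteq> 0" using c by simp
      then have "a * w x = -1" unfolding a_def c by (simp add: field_simps)
      then have "a * w i * w x = - w i" by (metis mult.assoc mult.commute mult_minus1)
      then have "H i x = (if i = x then 1 else 0) + w i" using i x
        by (simp add: H_def)
      then show ?thesis by (simp add: w_def)
    qed
  qed
  ultimately show ?thesis by blast
qed

lemma spectral:
  assumes "finite I" "onI I A" "tp A = A"
  shows "\<exists>Q d. onI I Q \<and> mm I Q (tp Q) = idm I \<and> A = mm I (mm I Q (dg I d)) (tp Q)"
  using assms
proof (induction I arbitrary: A rule: finite_induct)
  case empty
  then show ?case
    by (intro exI[of _ "\<lambda>_ _. 0"] exI[of _ "\<lambda>_. 0"]) (auto simp: onI_def mm_def idm_def fun_eq_iff)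
next
  case (insert x F A)
  define I where "I = insert x F"
  have fin: "finite I" using insert by (simp add: I_def)
  have x: "x \<in> I" by (simp add: I_def)
  have onA: "onI I A" using insert I_def by simp
  have sym: "\<And>i j. A i j = A j i" using insert(5) by (metis tp_def)
  obtain v \<mu> where v: "(\<Sum>i\<in>I. (v i)^2) = 1" and ev: "\<And>i. i \<in> I \<Longrightarrow> (\<Sum>j\<in>I. A i j * v j) = \<mu> * v i"
    using real_sym_eigen_set[OF fin, of A] sym x by blast
  obtain H where H: "onI I H" "tp H = H" "mm I H H = idm I" "\<And>i. i \<in> I \<Longrightarrow> H i x = v i"
    using householder[OF fin x v] by blast
  have HHX: "mm I H (mm I H X) = X" if "onI I X" for X
    using that by (simp add: mm_assoc[OF fin, symmetric] H(3) mm_idm_left[OF _ fin])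
  define B where "B = mm I H (mm I A H)"
  have onB: "onI I B" by (simp add: B_def)
  have tpB: "tp B = B" unfolding B_def tp_mm H(2) insert(5) by (simp add: mm_assoc[OF fin])
  have AHx: "mm I A H l x = \<mu> * H l x" if l: "l \<in> I" for l
    using l x ev[OF l] by (simp add: mm_def H(4))
  have Bx: "B i x = \<mu> * idm I i x" if i: "i \<in> I" for i
  proof -
    have "B i x = (\<Sum>l\<in>I. H i l * mm I A H l x)"
      using i x by (simp add: B_def mm_def)
    also have "\<dots> = (\<Sum>l\<in>I. H i l * (\<mu> * H l x))"
      by (intro sum.cong refl) (simp add: AHx)
    also have "\<dots> = \<mu> * mm I H H i x"
      using i x by (simp add: mm_def sum_distrib_left algebra_simps)
    finally show ?thesis by (simp add: H(3))
  qed
  have Bsym: "\<And>i j. B i j = B j i" using tpB by (metis tp_def)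
  define A' where "A' = (\<lambda>i j. if i \<in> F \<and> j \<in> F then B i j else 0)"
  have onA': "onI F A'" by (simp add: onI_def A'_def)
  have tpA': "tp A' = A'" by (auto simp: tp_def A'_def fun_eq_iff Bsym)
  obtain Q' d' where Q': "onI F Q'" "mm F Q' (tp Q') = idm F" "A' = mm F (mm F Q' (dg F d')) (tp Q')"
    using insert(3)[OF onA' tpA'] by blast
  define Q2 where "Q2 = (\<lambda>i k. if i = x \<and> k = x then 1 else Q' i k)"
  define d where "d = d'(x := \<mu>)"
  have Q'x: "\<And>k. Q' x k = 0" "\<And>k. Q' k x = 0" using Q'(1) insert(2) by (auto simp: onI_def)
  have onQ2: "onI I Q2" using Q'(1) insert(2) by (auto simp: onI_def Q2_def I_def)
  have sumI: "(\<Sum>k\<in>I. g k) = g x + (\<Sum>k\<in>F. g k)" for g :: "_ \<Rightarrow> real"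
    unfolding I_def using insert(1,2) by simp
  have Q2F: "\<And>i k. k \<in> F \<Longrightarrow> Q2 i k = Q' i k" using insert(2) by (auto simp: Q2_def)
  have Q2x: "\<And>i. Q2 i x = (if i = x then 1 else 0)" by (simp add: Q2_def Q'x)
  have orth2: "mm I Q2 (tp Q2) = idm I"
  proof (rule ext, rule ext)
    fix i j
    show "mm I Q2 (tp Q2) i j = idm I i j"
    proof (cases "i \<in> I \<and> j \<in> I")
      case True
      have "mm I Q2 (tp Q2) i j = (\<Sum>k\<in>I. Q2 i k * Q2 j k)"
        using True by (simp add: mm_def tp_def)
      also have "\<dots> = Q2 i x * Q2 j x + (\<Sum>k\<in>F. Q2 i k * Q2 j k)" by (rule sumI)
      also have "\<dots> = Q2 i x * Q2 j x + (\<Sum>k\<in>F. Q' i k * Q' j k)"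
        by (rule arg_cong2[where f="(+)"], rule refl, rule sum.cong[OF refl], simp add: Q2F)
      also have "\<dots> = idm I i j"
      proof (cases "i = x \<or> j = x")
        case True
        have s0: "(\<Sum>k\<in>F. Q' i k * Q' j k) = 0"
          using True by (cases "i = x") (simp_all add: Q'x)
        have "i \<in> I" "j \<in> I" using \<open>i \<in> I \<and> j \<in> I\<close> by auto
        then show ?thesis unfolding s0 using True by (cases "i = x"; cases "j = x") (simp_all add: Q2x idm_def)
      next
        case False
        then have "i \<in> F" "j \<in> F" using True by (auto simp: I_def)
        then have "(\<Sum>k\<in>F. Q' i k * Q' j k) = idm F i j"
          using arg_cong[OF Q'(2), of "\<lambda>M. M i j"] by (simp add: mm_def tp_def)
        then show ?thesis using False \<open>i \<in> F\<close> by (simp add: Q2x idm_def I_def)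
      qed
      finally show ?thesis .
    next
      case False
      then show ?thesis by (auto simp: mm_def idm_def)
    qed
  qed
  have Bdec: "B = mm I (mm I Q2 (dg I d)) (tp Q2)"
  proof (rule ext, rule ext)
    fix i j
    show "B i j = mm I (mm I Q2 (dg I d)) (tp Q2) i j"
    proof (cases "i \<in> I \<and> j \<in> I")
      case True
      have "mm I (mm I Q2 (dg I d)) (tp Q2) i j = (\<Sum>k\<in>I. Q2 i k * d k * Q2 j k)"
        using True fin by (simp add: mm_dg_entry)
      also have "\<dots> = Q2 i x * d x * Q2 j x + (\<Sum>k\<in>F. Q2 i k * d k * Q2 j k)" by (rule sumI)
      also have "\<dots> = Q2 i x * \<mu> * Q2 j x + (\<Sum>k\<in>F. Q' i k * d' k * Q' j k)"
      proof (rule arg_cong2[where f="(+)"])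
        show "Q2 i x * d x * Q2 j x = Q2 i x * \<mu> * Q2 j x" by (simp add: d_def)
        have "\<And>k. k \<in> F \<Longrightarrow> d k = d' k" using insert(2) by (auto simp: d_def)
        then show "(\<Sum>k\<in>F. Q2 i k * d k * Q2 j k) = (\<Sum>k\<in>F. Q' i k * d' k * Q' j k)"
          by (intro sum.cong[OF refl]) (simp add: Q2F)
      qed
      also have "\<dots> = B i j"
      proof (cases "i = x \<or> j = x")
        case True
        have s0: "(\<Sum>k\<in>F. Q' i k * d' k * Q' j k) = 0"
          using True by (cases "i = x") (simp_all add: Q'x)
        have ij: "i \<in> I" "j \<in> I" using \<open>i \<in> I \<and> j \<in> I\<close> by auto
        show ?thesis
        proof (cases "j = x")
          case True
          then show ?thesis unfolding s0 using Bx[OF ij(1)] by (simp add: Q2x idm_def ij)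
        next
          case False
          then have "i = x" using \<open>i = x \<or> j = x\<close> by simp
          then have "B i j = B j x" using Bsym by simp
          then show ?thesis unfolding s0 using Bx[OF ij(2)] False \<open>i = x\<close> by (simp add: Q2x idm_def ij)
        qed
      next
        case False
        then have "i \<in> F" "j \<in> F" using True by (auto simp: I_def)
        then have "(\<Sum>k\<in>F. Q' i k * d' k * Q' j k) = A' i j"
          using arg_cong[OF Q'(3), of "\<lambda>M. M i j"] mm_dg_entry[of i F j Q' d'] insert(1) by simp
        then show ?thesis using False \<open>i \<in> F\<close> \<open>j \<in> F\<close> by (simp add: Q2x A'_def)
      qed
      finally show ?thesis by simp
    next
      case False
      then show ?thesis using onB by (auto simp: mm_def onI_def)
    qed
  qed
  define Q where "Q = mm I H Q2"
  have "onI I Q" by (simp add: Q_def)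
  moreover have "mm I Q (tp Q) = idm I"
  proof -
    have "mm I Q (tp Q) = mm I H (mm I (mm I Q2 (tp Q2)) H)"
      unfolding Q_def tp_mm H(2) by (simp only: mm_assoc[OF fin])
    also have "\<dots> = idm I" by (simp only: orth2 mm_idm_left[OF H(1) fin] H(3))
    finally show ?thesis .
  qed
  moreover have "A = mm I (mm I Q (dg I d)) (tp Q)"
  proof -
    have e1: "mm I B H = mm I H A"
      unfolding B_def by (simp only: mm_assoc[OF fin] H(3) mm_idm_right[OF onA fin])
    have "A = mm I H (mm I B H)" unfolding e1 by (rule HHX[OF onA, symmetric])
    also have "\<dots> = mm I (mm I Q (dg I d)) (tp Q)"
      unfolding Bdec Q_def tp_mm H(2) by (simp only: mm_assoc[OF fin])
    finally show ?thesis .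
  qed
  ultimately show ?case unfolding I_def by blast
qed


lemma tomat_inj:
  assumes f: "bij_betw f {..<n} I" and A: "onI I A" and B: "onI I B" and eq: "tomat n f A = tomat n f B"
  shows "A = B"
proof (rule ext, rule ext)
  fix i j
  show "A i j = B i j"
  proof (cases "i \<in> I \<and> j \<in> I")
    case True
    then obtain k l where k: "k < n" "i = f k" and l: "l < n" "j = f l"
      using f unfolding bij_betw_def by (metis imageE lessThan_iff)
    have "tomat n f A $$ (k,l) = tomat n f B $$ (k,l)" using eq by simp
    then show ?thesis using k l by simp
  next
    case False
    then show ?thesis using A B by (auto simp: onI_def)
  qed
qed

lemma orth_both:
  assumes fin: "finite I" and on: "onI I Q" and P: "mm I Q (tp Q) = idm I"
  shows "mm I (tp Q) Q = idm I"
proof -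
  obtain f where f: "bij_betw f {..<card I} I" using finite_enum[OF fin] by blast
  define n where "n = card I"
  note f = f[folded n_def]
  define Pm where "Pm = tomat n f Q"
  have Pm: "Pm \<in> carrier_mat n n" "transpose_mat Pm \<in> carrier_mat n n"
    by (auto simp: Pm_def)
  have PP: "Pm * transpose_mat Pm = 1\<^sub>m n"
    using arg_cong[OF P, of "tomat n f"] unfolding tomat_mm[OF f] tomat_tp tomat_idm[OF f] Pm_def .
  have PP2: "transpose_mat Pm * Pm = 1\<^sub>m n"
    using mat_mult_left_right_inverse[OF Pm(1) Pm(2) PP] .
  have "tomat n f (mm I (tp Q) Q) = tomat n f (idm I)"
    unfolding tomat_mm[OF f] tomat_tp tomat_idm[OF f] using PP2 unfolding Pm_def .
  then show ?thesis by (rule tomat_inj[OF f onI_mm onI_idm])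
qed

lemma charpoly_reindex:
  assumes g: "bij_betw g J I" and fin: "finite J"
  shows "charpoly J (\<lambda>i j. A (g i) (g j)) = charpoly I A"
proof -
  obtain f where f: "bij_betw f {..<card J} J" using finite_enum[OF fin] by blast
  have gf: "bij_betw (g \<circ> f) {..<card J} I" by (rule bij_betw_trans[OF f g])
  have "tomat (card J) f (\<lambda>i j. A (g i) (g j)) = tomat (card J) (g \<circ> f) A"
    by (simp add: tomat_def)
  then show ?thesis using charpoly_bridge[OF f] charpoly_bridge[OF gf] by simp
qed

lemma charpoly_nonzero: assumes "finite I" shows "charpoly I A \<noteq> 0"
proof -
  obtain f where f: "bij_betw f {..<card I} I" using finite_enum[OF assms] by blast
  have "coeff (char_poly (tomat (card I) f A)) (card I) = 1"
    using degree_monic_char_poly[OF tomat_carrier] by blast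
  then show ?thesis unfolding charpoly_bridge[OF f] by auto
qed

lemma proots_lin_prod: assumes "finite I"
  shows "proots (\<Prod>i\<in>I. [:- d i, 1:]) = image_mset d (mset_set I)"
proof -
  have "proots (\<Prod>i\<in>I. [:- d i, 1:]) = (\<Sum>i\<in>I. proots [:- d i, 1:])"
    by (rule proots_prod) simp
  also have "\<dots> = (\<Sum>i\<in>I. {#d i#})" by simp
  also have "\<dots> = image_mset d (mset_set I)"
    using assms by (induction I rule: finite_induct) auto
  finally show ?thesis .
qed

lemma sum_Z: assumes "finite P" "finite Q"
  shows "(\<Sum>z\<in>Inl ` P \<union> Inr ` Q. f z) = (\<Sum>a\<in>P. f (Inl a)) + (\<Sum>b\<in>Q. f (Inr b))"
proof -
  have "(\<Sum>z\<in>Inl ` P \<union> Inr ` Q. f z) = (\<Sum>z\<in>Inl ` P. f z) + (\<Sum>z\<in>Inr ` Q. f z)"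
    by (rule sum.union_disjoint) (use assms in auto)
  also have "(\<Sum>z\<in>Inl ` P. f z) = (\<Sum>a\<in>P. f (Inl a))" using sum.reindex[of Inl P f] by (simp add: inj_on_def)
  also have "(\<Sum>z\<in>Inr ` Q. f z) = (\<Sum>b\<in>Q. f (Inr b))" using sum.reindex[of Inr Q f] by (simp add: inj_on_def)
  finally show ?thesis .
qed

lemma mset_bij:
  assumes "finite K" "finite K'" "image_mset f (mset_set K) = image_mset g (mset_set K')"
  shows "\<exists>\<pi>. bij_betw \<pi> K K' \<and> (\<forall>k\<in>K. f k = g (\<pi> k))"
  using assms
proof (induction K arbitrary: K' rule: finite_induct)
  case empty
  then have "K' = {}" by (metis image_mset_is_empty_iff mset_set.infinite mset_set_empty_iff)
  then show ?case by (intro exI[of _ "\<lambda>_. undefined"]) (simp add: bij_betw_def)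
next
  case (insert k K0 K')
  have "f k \<in># image_mset g (mset_set K')" using insert(5)[symmetric] insert(1) by simp
  then obtain k' where k': "k' \<in> K'" "g k' = f k" using insert(4) by auto
  have "mset_set K' = add_mset k' (mset_set (K' - {k'}))"
    using k' insert(4) by (metis mset_set.remove)
  then have "add_mset (f k) (image_mset f (mset_set K0)) = add_mset (f k) (image_mset g (mset_set (K' - {k'})))"
    using insert(5) insert(1,2) k' by simp
  then have "image_mset f (mset_set K0) = image_mset g (mset_set (K' - {k'}))" by simp
  then obtain \<pi>0 where p0: "bij_betw \<pi>0 K0 (K' - {k'})" "\<forall>k\<in>K0. f k = g (\<pi>0 k)"
    using insert(3)[of "K' - {k'}"] insert(4) by auto
  define \<pi> where "\<pi> = \<pi>0(k := k')"
  have "bij_betw \<pi> K0 (K' - {k'}) = bij_betw \<pi>0 K0 (K' - {k'})"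
    using insert(2) unfolding \<pi>_def by (intro bij_betw_cong) auto
  then have "bij_betw \<pi> K0 (K' - {k'})" using p0(1) by simp
  then have "bij_betw \<pi> (K0 \<union> {k}) ((K' - {k'}) \<union> {\<pi> k})"
    using insert(2) by (intro notIn_Un_bij_betw) (auto simp: \<pi>_def)
  then have "bij_betw \<pi> (insert k K0) (insert k' (K' - {k'}))" by (simp add: \<pi>_def)
  moreover have "insert k' (K' - {k'}) = K'" using k' by auto
  moreover have "\<forall>x\<in>insert k K0. f x = g (\<pi> x)" using p0(2) k' insert(2) by (auto simp: \<pi>_def)
  ultimately show ?case by auto
qed

lemma mset_realise:
  assumes "finite E" "size \<sigma> = card E"
  shows "\<exists>e. image_mset e (mset_set E) = \<sigma>"
  using assms
proof (induction E arbitrary: \<sigma> rule: finite_induct)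
  case empty then show ?case by simp
next
  case (insert h E0 \<sigma>)
  then have "\<sigma> \<noteq> {#}" by auto
  then obtain s where s: "s \<in># \<sigma>" by blast
  have "size (\<sigma> - {#s#}) = card E0" using insert s by (simp add: size_Diff_singleton)
  then obtain e0 where e0: "image_mset e0 (mset_set E0) = \<sigma> - {#s#}" using insert(3) by blast
  have "image_mset (e0(h := s)) (mset_set E0) = image_mset e0 (mset_set E0)"
    using insert(1,2) by (intro image_mset_cong) auto
  then have "image_mset (e0(h := s)) (mset_set (insert h E0)) = add_mset s (\<sigma> - {#s#})"
    using insert(1,2) e0 by simp
  also have "\<dots> = \<sigma>" using s by simp
  finally show ?case by blast
qed


lemma dim_cpm_tomat[simp]: "dim_row (char_poly_matrix (tomat n f A)) = n" "dim_col (char_poly_matrix (tomat n f A)) = n"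
  by (simp_all add: char_poly_matrix_def)

lemma charpoly_block:
  assumes finJ: "finite J" and finK: "finite K" and disj: "J \<inter> K = {}"
    and z: "\<And>i j. i \<in> J \<Longrightarrow> j \<in> K \<Longrightarrow> A i j = 0 \<and> A j i = 0"
  shows "charpoly (J \<union> K) A = charpoly J A * charpoly K A"
proof -
  obtain fJ where fJ: "bij_betw fJ {..<card J} J" using finite_enum[OF finJ] by blast
  obtain fK where fK: "bij_betw fK {..<card K} K" using finite_enum[OF finK] by blast
  define n1 where "n1 = card J"
  define n2 where "n2 = card K"
  note fJ = fJ[folded n1_def] and fK = fK[folded n2_def]
  define f where "f = (\<lambda>k. if k < n1 then fJ k else fK (k - n1))"
  have b1: "bij_betw f {..<n1} J"
  proof -
    have "bij_betw f {..<n1} J = bij_betw fJ {..<n1} J" by (intro bij_betw_cong) (auto simp: f_def)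
    then show ?thesis using fJ by simp
  qed
  have sh: "bij_betw (\<lambda>k. k - n1) {n1..<n1+n2} {..<n2}"
    by (rule bij_betw_byWitness[where f'="\<lambda>k. k + n1"]) auto
  have b2: "bij_betw f {n1..<n1+n2} K"
  proof -
    have "bij_betw f {n1..<n1+n2} K = bij_betw (fK \<circ> (\<lambda>k. k - n1)) {n1..<n1+n2} K"
      by (intro bij_betw_cong) (auto simp: f_def)
    then show ?thesis using bij_betw_trans[OF sh fK] by simp
  qed
  have "bij_betw f ({..<n1} \<union> {n1..<n1+n2}) (J \<union> K)" by (rule bij_betw_combine[OF b1 b2 disj])
  moreover have "{..<n1} \<union> {n1..<n1+n2} = {..<n1+n2}" by auto
  ultimately have f: "bij_betw f {..<n1+n2} (J \<union> K)" by simp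
  have fJi: "\<And>i. i < n1 \<Longrightarrow> fJ i \<in> J" using fJ by (auto simp: bij_betw_def)
  have fKi: "\<And>i. i < n2 \<Longrightarrow> fK i \<in> K" using fK by (auto simp: bij_betw_def)
  have cpm: "char_poly_matrix (tomat (n1+n2) f A) =
     four_block_mat (char_poly_matrix (tomat n1 fJ A)) (0\<^sub>m n1 n2) (0\<^sub>m n2 n1) (char_poly_matrix (tomat n2 fK A))"
  proof (rule eq_matI)
    fix i j assume i: "i < dim_row (four_block_mat (char_poly_matrix (tomat n1 fJ A)) (0\<^sub>m n1 n2) (0\<^sub>m n2 n1) (char_poly_matrix (tomat n2 fK A)))"
      and j: "j < dim_col (four_block_mat (char_poly_matrix (tomat n1 fJ A)) (0\<^sub>m n1 n2) (0\<^sub>m n2 n1) (char_poly_matrix (tomat n2 fK A)))"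
    then have i: "i < n1 + n2" and j: "j < n1 + n2" by auto
    show "char_poly_matrix (tomat (n1+n2) f A) $$ (i,j) = four_block_mat (char_poly_matrix (tomat n1 fJ A)) (0\<^sub>m n1 n2) (0\<^sub>m n2 n1) (char_poly_matrix (tomat n2 fK A)) $$ (i,j)"
    proof (cases "i < n1"; cases "j < n1")
      assume "i < n1" "j < n1" then show ?thesis using i j by (simp add: cpm_tomat f_def)
    next
      assume a: "i < n1" "\<not> j < n1"
      then have "A (fJ i) (fK (j - n1)) = 0" using z[OF fJi fKi] a j by simp
      then show ?thesis using i j a by (simp add: cpm_tomat f_def)
    next
      assume a: "\<not> i < n1" "j < n1"
      then have "A (fK (i - n1)) (fJ j) = 0" using z[OF fJi fKi] a i by simp
      then show ?thesis using i j a by (simp add: cpm_tomat f_def)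
    next
      assume a: "\<not> i < n1" "\<not> j < n1"
      then have "(i = j) = (i - n1 = j - n1)" by auto
      then show ?thesis using i j a by (simp add: cpm_tomat f_def)
    qed
  qed auto
  have "charpoly (J \<union> K) A = det (char_poly_matrix (tomat (n1+n2) f A))"
    unfolding charpoly_bridge[OF f] char_poly_def ..
  also have "\<dots> = det (char_poly_matrix (tomat n1 fJ A)) * det (char_poly_matrix (tomat n2 fK A))"
    unfolding cpm
    by (rule det_four_block_mat_upper_right_zero) (auto simp: char_poly_matrix_def)
  also have "\<dots> = charpoly J A * charpoly K A"
    unfolding charpoly_bridge[OF fJ] charpoly_bridge[OF fK] char_poly_def ..
  finally show ?thesis .
qed


definition bd :: "'a set \<Rightarrow> 'b set \<Rightarrow> 'b rmat \<Rightarrow> ('a + 'b) rmat" where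
  "bd P Hs U = (\<lambda>z z'. case (z, z') of (Inl a, Inl b) \<Rightarrow> if a \<in> P \<and> a = b then 1 else 0
      | (Inr h, Inr h') \<Rightarrow> if h \<in> Hs \<and> h' \<in> Hs then U h h' else 0 | _ \<Rightarrow> 0)"

lemma bd_simps[simp]:
  "bd P Hs U (Inl a) (Inl b) = (if a \<in> P \<and> a = b then 1 else 0)"
  "bd P Hs U (Inr h) (Inr h') = (if h \<in> Hs \<and> h' \<in> Hs then U h h' else 0)"
  "bd P Hs U (Inl a) (Inr h) = 0"
  "bd P Hs U (Inr h) (Inl a) = 0"
  by (simp_all add: bd_def)

lemma tp_bd: "tp (bd P Hs U) = bd P Hs (tp U)"
  by (auto simp: tp_def bd_def fun_eq_iff split: sum.splits)

lemma onI_bd: "onI (Inl ` P \<union> Inr ` Hs) (bd P Hs U)"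
  by (auto simp: onI_def bd_def split: sum.splits)

lemma bd_row_l:
  assumes "finite P" "finite Hs" "a \<in> P"
  shows "(\<Sum>q\<in>Inl ` P \<union> Inr ` Hs. bd P Hs U (Inl a) q * F q) = F (Inl a)"
  using assms by (simp add: sum_Z if_distrib[of "\<lambda>x. x * _"] cong: if_cong)

lemma bd_row_r:
  assumes "finite P" "finite Hs" "h \<in> Hs"
  shows "(\<Sum>q\<in>Inl ` P \<union> Inr ` Hs. bd P Hs U (Inr h) q * F q) = (\<Sum>k\<in>Hs. U h k * F (Inr k))"
  using assms by (simp add: sum_Z)

lemma bd_conj:
  assumes fP: "finite P" and fH: "finite Hs"
  defines "Z \<equiv> Inl ` P \<union> Inr ` Hs"
  shows "a \<in> P \<Longrightarrow> b \<in> P \<Longrightarrow> mm Z (mm Z (bd P Hs U) X) (tp (bd P Hs U)) (Inl a) (Inl b) = X (Inl a) (Inl b)"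
    and "a \<in> P \<Longrightarrow> h \<in> Hs \<Longrightarrow> mm Z (mm Z (bd P Hs U) X) (tp (bd P Hs U)) (Inl a) (Inr h) = (\<Sum>k\<in>Hs. U h k * X (Inl a) (Inr k))"
    and "a \<in> P \<Longrightarrow> h \<in> Hs \<Longrightarrow> mm Z (mm Z (bd P Hs U) X) (tp (bd P Hs U)) (Inr h) (Inl a) = (\<Sum>k\<in>Hs. U h k * X (Inr k) (Inl a))"
    and "h \<in> Hs \<Longrightarrow> h' \<in> Hs \<Longrightarrow> mm Z (mm Z (bd P Hs U) X) (tp (bd P Hs U)) (Inr h) (Inr h') = (\<Sum>k'\<in>Hs. U h' k' * (\<Sum>k\<in>Hs. U h k * X (Inr k) (Inr k')))"
proof -
  let ?T = "bd P Hs U"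
  have ent: "mm Z (mm Z ?T X) (tp ?T) z z' = (\<Sum>q\<in>Z. ?T z' q * (\<Sum>p\<in>Z. ?T z p * X p q))"
    if "z \<in> Z" "z' \<in> Z" for z z'
    using that by (simp add: mm_def tp_def mult.commute cong: sum.cong)
  have inner_l: "(\<Sum>p\<in>Z. ?T (Inl a) p * X p q) = X (Inl a) q" if "a \<in> P" for a q
    unfolding Z_def by (rule bd_row_l[OF fP fH that])
  have inner_r: "(\<Sum>p\<in>Z. ?T (Inr h) p * X p q) = (\<Sum>k\<in>Hs. U h k * X (Inr k) q)" if "h \<in> Hs" for h q
    unfolding Z_def by (rule bd_row_r[OF fP fH that])
  have outer_l: "(\<Sum>q\<in>Z. ?T (Inl b) q * F q) = F (Inl b)" if "b \<in> P" for b F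
    unfolding Z_def by (rule bd_row_l[OF fP fH that])
  have outer_r: "(\<Sum>q\<in>Z. ?T (Inr h) q * F q) = (\<Sum>k\<in>Hs. U h k * F (Inr k))" if "h \<in> Hs" for h F
    unfolding Z_def by (rule bd_row_r[OF fP fH that])
  have ZP: "\<And>a. a \<in> P \<Longrightarrow> Inl a \<in> Z" and ZH: "\<And>h. h \<in> Hs \<Longrightarrow> Inr h \<in> Z" by (auto simp: Z_def)
  show "a \<in> P \<Longrightarrow> b \<in> P \<Longrightarrow> mm Z (mm Z ?T X) (tp ?T) (Inl a) (Inl b) = X (Inl a) (Inl b)"
    by (simp add: ent ZP outer_l inner_l)
  show "a \<in> P \<Longrightarrow> h \<in> Hs \<Longrightarrow> mm Z (mm Z ?T X) (tp ?T) (Inl a) (Inr h) = (\<Sum>k\<in>Hs. U h k * X (Inl a) (Inr k))"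
    by (simp add: ent ZP ZH outer_r inner_l)
  show "a \<in> P \<Longrightarrow> h \<in> Hs \<Longrightarrow> mm Z (mm Z ?T X) (tp ?T) (Inr h) (Inl a) = (\<Sum>k\<in>Hs. U h k * X (Inr k) (Inl a))"
    by (simp add: ent ZP ZH outer_l inner_r)
  show "h \<in> Hs \<Longrightarrow> h' \<in> Hs \<Longrightarrow> mm Z (mm Z ?T X) (tp ?T) (Inr h) (Inr h') = (\<Sum>k'\<in>Hs. U h' k' * (\<Sum>k\<in>Hs. U h k * X (Inr k) (Inr k')))"
    by (simp add: ent ZH outer_r inner_r)
qed

lemma bd_orth:
  assumes fP: "finite P" and fH: "finite Hs" and U: "mm Hs U (tp U) = idm Hs"
  shows "mm (Inl ` P \<union> Inr ` Hs) (bd P Hs U) (tp (bd P Hs U)) = idm (Inl ` P \<union> Inr ` Hs)"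
proof (rule ext, rule ext)
  fix z z'
  let ?Z = "Inl ` P \<union> Inr ` Hs"
  show "mm ?Z (bd P Hs U) (tp (bd P Hs U)) z z' = idm ?Z z z'"
  proof (cases "z \<in> ?Z \<and> z' \<in> ?Z")
    case True
    then have e: "mm ?Z (bd P Hs U) (tp (bd P Hs U)) z z' = (\<Sum>q\<in>?Z. bd P Hs U z q * bd P Hs U z' q)"
      by (simp add: mm_def tp_def)
    show ?thesis
    proof (cases z)
      case (Inl a)
      then have a: "a \<in> P" using True by auto
      have r: "(\<Sum>q\<in>?Z. bd P Hs U (Inl a) q * bd P Hs U z' q) = bd P Hs U z' (Inl a)"
        by (rule bd_row_l[OF fP fH a])
      show ?thesis using e r True unfolding Inl by (cases z') (auto simp: idm_def)
    next
      case (Inr h)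
      then have h: "h \<in> Hs" using True by auto
      have r: "(\<Sum>q\<in>?Z. bd P Hs U (Inr h) q * bd P Hs U z' q) = (\<Sum>k\<in>Hs. U h k * bd P Hs U z' (Inr k))"
        by (rule bd_row_r[OF fP fH h])
      show ?thesis
      proof (cases z')
        case (Inl b) then show ?thesis using e r unfolding Inr by (simp add: idm_def)
      next
        case (Inr h')
        then have h': "h' \<in> Hs" using True by auto
        have "(\<Sum>k\<in>Hs. U h k * U h' k) = idm Hs h h'"
          using arg_cong[OF U, of "\<lambda>M. M h h'"] h h' by (simp add: mm_def tp_def)
        moreover have "(\<Sum>k\<in>Hs. U h k * bd P Hs U z' (Inr k)) = (\<Sum>k\<in>Hs. U h k * U h' k)"
          unfolding Inr using h' by (intro sum.cong) auto
        ultimately show ?thesis using e r h h' \<open>z = Inr h\<close> Inr by (simp add: idm_def)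
      qed
    qed
  next
    case False
    then show ?thesis by (auto simp: mm_def idm_def)
  qed
qed


lemma spec_decomp:
  assumes fin: "finite I" and Q: "mm I Q (tp Q) = idm I" and A: "A = mm I (mm I Q (dg I d)) (tp Q)"
  shows "spectrum I A = image_mset d (mset_set I)"
proof -
  have "charpoly I A = charpoly I (dg I d)" unfolding A by (rule charpoly_orth_sim[OF fin Q])
  also have "\<dots> = (\<Prod>i\<in>I. [:- d i, 1:])" by (rule charpoly_dg[OF fin])
  finally show ?thesis unfolding spectrum_def using proots_lin_prod[OF fin] by simp
qed

theorem lemma3p6:
  fixes G :: "'a graph" and H :: "'b graph"
    and V1 V2 X :: "'a set" and M :: "'a rmat" and \<sigma>' :: "real multiset"
  assumes "graph G"
    and "V1 \<union> V2 = verts G" and "V1 \<inter> V2 = {}"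
    and "X \<subseteq> V1" and "X = vertex_boundary G V2"
    and "connected_graph H" and "card (verts H) \<ge> card V2"
    and "M \<in> S(G)"
    and "size \<sigma>' = card (verts H) - card V2"
    and "generically_realisable (spectrum V2 (submatrix M V2) + \<sigma>') H"
  shows "\<exists>N \<in> S(partial_join (induced G V1) X H).
           spectrum (verts (partial_join (induced G V1) X H)) N = spectrum (verts G) M + \<sigma>'"
proof -
  note gG = assms(1) and VV = assms(2) and Vdisj = assms(3) and XV1 = assms(4) and Xdef = assms(5)
    and cH = assms(6) and cardH = assms(7) and MS = assms(8) and sz = assms(9) and gr = assms(10)
  define Hs where "Hs = verts H"
  have finG: "finite (verts G)" using gG by (simp add: graph_def)
  have finH: "finite Hs" using cH by (simp add: connected_graph_def graph_def Hs_def)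
  have V1G: "V1 \<subseteq> verts G" and V2G: "V2 \<subseteq> verts G" using VV by auto
  have finV1: "finite V1" and finV2: "finite V2" using V1G V2G finG finite_subset by auto
  have Mout: "\<And>i j. i \<notin> verts G \<or> j \<notin> verts G \<Longrightarrow> M i j = 0" using MS by (simp add: S_set_def)
  have Msym: "M i j = M j i" for i j
  proof (cases "i \<in> verts G \<and> j \<in> verts G")
    case True then show ?thesis using MS by (simp add: S_set_def)
  next
    case False
    then have d: "i \<notin> verts G \<or> j \<notin> verts G" by simp
    then have "j \<notin> verts G \<or> i \<notin> verts G" by blast
    then show ?thesis using Mout[OF d] Mout[of j i] by simp
  qed
  have Madj: "\<And>i j. i \<in> verts G \<Longrightarrow> j \<in> verts G \<Longrightarrow> i \<noteq> j \<Longrightarrow> (M i j \<noteq> 0) = adj G i j"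
    using MS by (simp add: S_set_def)
  obtain \<psi> where \<psi>: "\<psi> ` V2 \<subseteq> Hs" "inj_on \<psi> V2"
    using card_le_inj[OF finV2 finH] cardH unfolding Hs_def by blast
  define W where "W = \<psi> ` V2"
  define E where "E = Hs - W"
  define \<phi> where "\<phi> = inv_into V2 \<psi>"
  have WH: "W \<subseteq> Hs" using \<psi> by (simp add: W_def)
  have bpsi: "bij_betw \<psi> V2 W" using \<psi> by (simp add: W_def bij_betw_def)
  have bphi: "bij_betw \<phi> W V2" unfolding \<phi>_def W_def using bpsi[unfolded W_def] by (rule bij_betw_inv_into)
  have phiV2: "\<And>h. h \<in> W \<Longrightarrow> \<phi> h \<in> V2" using bphi by (auto simp: bij_betw_def)
  have phipsi: "\<And>v. v \<in> V2 \<Longrightarrow> \<phi> (\<psi> v) = v" unfolding \<phi>_def using \<psi>(2) by simp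
  have finW: "finite W" and finE: "finite E" using finH WH by (auto simp: E_def intro: finite_subset)
  have HWE: "Hs = W \<union> E" and WE: "W \<inter> E = {}" using WH by (auto simp: E_def)
  have cardW: "card W = card V2" using bpsi by (simp add: bij_betw_same_card)
  have cardE: "card E = size \<sigma>'" unfolding sz E_def Hs_def using card_Diff_subset[OF finW WH] cardW
    by (simp add: Hs_def)
  obtain e where e: "image_mset e (mset_set E) = \<sigma>'" using mset_realise[OF finE cardE[symmetric]] by blast
  define C where "C = submatrix M V2"
  define Mh where "Mh = (\<lambda>h h'. if h \<in> W \<and> h' \<in> W then M (\<phi> h) (\<phi> h')
      else if h \<in> E \<and> h = h' then e h else 0)"
  have onMh: "onI Hs Mh" using WH by (auto simp: onI_def Mh_def E_def)
  have tpMh: "tp Mh = Mh" by (auto simp: tp_def Mh_def fun_eq_iff Msym)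
  have specMh: "spectrum Hs Mh = spectrum V2 C + \<sigma>'"
  proof -
    have z: "Mh i j = 0 \<and> Mh j i = 0" if "i \<in> W" "j \<in> E" for i j
      using that WE by (auto simp: Mh_def)
    have "charpoly Hs Mh = charpoly W Mh * charpoly E Mh"
      unfolding HWE by (rule charpoly_block[OF finW finE WE z])
    moreover have "charpoly W Mh = charpoly V2 C"
    proof -
      have "charpoly W Mh = charpoly W (\<lambda>i j. C (\<phi> i) (\<phi> j))"
        by (rule charpoly_cong) (simp add: Mh_def C_def submatrix_def phiV2)
      also have "\<dots> = charpoly V2 C" by (rule charpoly_reindex[OF bphi finW])
      finally show ?thesis .
    qed
    moreover have "charpoly E Mh = (\<Prod>h\<in>E. [:- e h, 1:])"
    proof -
      have "charpoly E Mh = charpoly E (dg E e)"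
        by (rule charpoly_cong) (use WE in \<open>auto simp: Mh_def dg_def\<close>)
      then show ?thesis using charpoly_dg[OF finE] by simp
    qed
    ultimately have "charpoly Hs Mh = charpoly V2 C * (\<Prod>h\<in>E. [:- e h, 1:])" by simp
    moreover have "(\<Prod>h\<in>E. [:- e h, 1:]) \<noteq> 0" by (simp add: finE)
    ultimately show ?thesis unfolding spectrum_def
      using proots_mult[OF charpoly_nonzero[OF finV2, of C], of "\<Prod>h\<in>E. [:- e h, 1:]"]
        proots_lin_prod[OF finE, of e] e by simp
  qed
  obtain Q1 d1 where Q1: "onI Hs Q1" "mm Hs Q1 (tp Q1) = idm Hs" "Mh = mm Hs (mm Hs Q1 (dg Hs d1)) (tp Q1)"
    using spectral[OF finH onMh tpMh] by blast
  have specd1: "spectrum Hs Mh = image_mset d1 (mset_set Hs)" by (rule spec_decomp[OF finH Q1(2,3)])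
  have "\<exists>d. image_mset d (mset_set Hs) = spectrum V2 C + \<sigma>' \<and>
       (\<forall>Y. finite Y \<and>
            (\<forall>y\<in>Y. (\<forall>i. i \<notin> Hs \<longrightarrow> y i = 0) \<and> (\<exists>i\<in>Hs. y i \<noteq> 0)) \<longrightarrow>
          (\<exists>U. orthogonal_on Hs U \<and> conj_diag Hs U d \<in> S(H) \<and>
               (\<forall>y\<in>Y. \<forall>i\<in>Hs. mat_vec Hs U y i \<noteq> 0)))"
    using gr unfolding generically_realisable_def C_def Hs_def by (rule conjunct2)
  then obtain d where dd: "image_mset d (mset_set Hs) = spectrum V2 C + \<sigma>' \<and>
       (\<forall>Y. finite Y \<and>
            (\<forall>y\<in>Y. (\<forall>i. i \<notin> Hs \<longrightarrow> y i = 0) \<and> (\<exists>i\<in>Hs. y i \<noteq> 0)) \<longrightarrow>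
          (\<exists>U. orthogonal_on Hs U \<and> conj_diag Hs U d \<in> S(H) \<and>
               (\<forall>y\<in>Y. \<forall>i\<in>Hs. mat_vec Hs U y i \<noteq> 0)))" by (rule exE)
  have d: "image_mset d (mset_set Hs) = spectrum V2 C + \<sigma>'" using dd by (rule conjunct1)
  have Yprop: "\<exists>U. orthogonal_on Hs U \<and> conj_diag Hs U d \<in> S(H) \<and>
               (\<forall>y\<in>Y. \<forall>i\<in>Hs. mat_vec Hs U y i \<noteq> 0)"
    if "finite Y" "\<forall>y\<in>Y. (\<forall>i. i \<notin> Hs \<longrightarrow> y i = 0) \<and> (\<exists>i\<in>Hs. y i \<noteq> 0)" for Y
    using dd that by simp
  obtain \<pi> where \<pi>: "bij_betw \<pi> Hs Hs" "\<And>k. k \<in> Hs \<Longrightarrow> d1 k = d (\<pi> k)"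
    using mset_bij[OF finH finH, of d1 d] specd1 specMh d by auto
  define \<pi>i where "\<pi>i = inv_into Hs \<pi>"
  have bpi: "bij_betw \<pi>i Hs Hs" unfolding \<pi>i_def by (rule bij_betw_inv_into[OF \<pi>(1)])
  have pipi: "\<And>k. k \<in> Hs \<Longrightarrow> \<pi> (\<pi>i k) = k" unfolding \<pi>i_def using \<pi>(1)
    by (simp add: bij_betw_inv_into_right)
  define Qh where "Qh = (\<lambda>h k. if h \<in> Hs \<and> k \<in> Hs then Q1 h (\<pi>i k) else 0)"
  have onQh: "onI Hs Qh" by (simp add: onI_def Qh_def)
  have reix: "(\<Sum>k\<in>Hs. F (\<pi>i k)) = (\<Sum>j\<in>Hs. F j)" for F :: "_ \<Rightarrow> real"
    using sum.reindex_bij_betw[OF bpi, of F] by simp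
  have Qh_orth: "mm Hs Qh (tp Qh) = idm Hs"
  proof -
    have "mm Hs Qh (tp Qh) = mm Hs Q1 (tp Q1)"
    proof (rule ext, rule ext)
      fix h h'
      have "(\<Sum>k\<in>Hs. Qh h k * Qh h' k) = (\<Sum>k\<in>Hs. Q1 h (\<pi>i k) * Q1 h' (\<pi>i k))" if "h \<in> Hs" "h' \<in> Hs"
        using that by (intro sum.cong) (auto simp: Qh_def)
      then show "mm Hs Qh (tp Qh) h h' = mm Hs Q1 (tp Q1) h h'"
        by (simp add: mm_def tp_def reix[of "\<lambda>j. Q1 h j * Q1 h' j"])
    qed
    then show ?thesis using Q1(2) by simp
  qed
  have Qh_orth2: "mm Hs (tp Qh) Qh = idm Hs" by (rule orth_both[OF finH onQh Qh_orth])
  have Mh_dec: "Mh = mm Hs (mm Hs Qh (dg Hs d)) (tp Qh)"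
  proof (rule ext, rule ext)
    fix h h'
    show "Mh h h' = mm Hs (mm Hs Qh (dg Hs d)) (tp Qh) h h'"
    proof (cases "h \<in> Hs \<and> h' \<in> Hs")
      case True
      have "mm Hs (mm Hs Qh (dg Hs d)) (tp Qh) h h' = (\<Sum>k\<in>Hs. Qh h k * d k * Qh h' k)"
        using True by (simp add: mm_dg_entry finH)
      also have "\<dots> = (\<Sum>k\<in>Hs. (\<lambda>j. Q1 h j * d (\<pi> j) * Q1 h' j) (\<pi>i k))"
        using True by (intro sum.cong) (auto simp: Qh_def pipi)
      also have "\<dots> = (\<Sum>j\<in>Hs. (\<lambda>j. Q1 h j * d (\<pi> j) * Q1 h' j) j)" by (rule reix)
      also have "\<dots> = (\<Sum>j\<in>Hs. Q1 h j * d1 j * Q1 h' j)"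
        by (intro sum.cong) (auto simp: \<pi>(2))
      also have "\<dots> = Mh h h'" using True Q1(3) by (simp add: mm_dg_entry finH)
      finally show ?thesis by simp
    next
      case False then show ?thesis using onMh by (auto simp: onI_def mm_def)
    qed
  qed
  have TQ: "mm Hs (tp Qh) (mm Hs Qh Y) = Y" if "onI Hs Y" for Y
    using that by (simp add: mm_assoc[OF finH, symmetric] Qh_orth2 mm_idm_left[OF _ finH])
  have D_dec: "dg Hs d = mm Hs (mm Hs (tp Qh) Mh) Qh"
    unfolding Mh_dec by (simp add: mm_assoc[OF finH] Qh_orth2 mm_idm_right[OF _ finH] TQ)
  define Bt where "Bt = (\<lambda>a h. if h \<in> W then M a (\<phi> h) else 0)"
  define ya where "ya = (\<lambda>a k. \<Sum>h\<in>Hs. Bt a h * Qh h k)"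
  have Qhe: "(\<Sum>k\<in>Hs. Qh h k * Qh h' k) = idm Hs h h'" if "h \<in> Hs" "h' \<in> Hs" for h h'
    using arg_cong[OF Qh_orth, of "\<lambda>M. M h h'"] that by (simp add: mm_def tp_def)
  have yinv: "(\<Sum>k\<in>Hs. ya a k * Qh h' k) = Bt a h'" if h': "h' \<in> Hs" for a h'
  proof -
    have "(\<Sum>k\<in>Hs. ya a k * Qh h' k) = (\<Sum>k\<in>Hs. \<Sum>h\<in>Hs. Bt a h * (Qh h k * Qh h' k))"
      unfolding ya_def by (simp add: sum_distrib_right mult.assoc)
    also have "\<dots> = (\<Sum>h\<in>Hs. \<Sum>k\<in>Hs. Bt a h * (Qh h k * Qh h' k))" by (rule sum.swap)
    also have "\<dots> = (\<Sum>h\<in>Hs. Bt a h * idm Hs h h')"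
      by (intro sum.cong refl) (simp add: sum_distrib_left[symmetric] Qhe h')
    also have "\<dots> = Bt a h'" using h' finH by (simp add: idm_def if_distrib[of "\<lambda>x. _ * x"] cong: if_cong)
    finally show ?thesis .
  qed
  have yout: "ya a k = 0" if "k \<notin> Hs" for a k using that by (simp add: ya_def Qh_def)
  have Xnz: "\<exists>h\<in>Hs. ya a h \<noteq> 0" if a: "a \<in> X" for a
  proof (rule ccontr)
    assume "\<not> (\<exists>h\<in>Hs. ya a h \<noteq> 0)"
    then have z: "\<And>h. h \<in> Hs \<Longrightarrow> ya a h = 0" by simp
    from a have "a \<in> vertex_boundary G V2" using Xdef by simp
    then obtain w where a': "a \<in> verts G" "a \<notin> V2" and w: "w \<in> V2" "adj G a w"
      unfolding vertex_boundary_def by blast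
    have "a \<noteq> w" using a' w by auto
    then have Mw: "M a w \<noteq> 0" using Madj[OF a'(1) _ \<open>a \<noteq> w\<close>] w V2G by auto
    have pw: "\<psi> w \<in> Hs" "\<psi> w \<in> W" using w \<psi>(1) by (auto simp: W_def)
    have "Bt a (\<psi> w) = M a w" using pw w by (simp add: Bt_def phipsi)
    moreover have "Bt a (\<psi> w) = 0" using yinv[OF pw(1), of a] z by simp
    ultimately show False using Mw by simp
  qed
  have notX: "Bt a h = 0" if a: "a \<in> V1" "a \<notin> X" for a h
  proof (rule ccontr)
    assume nz: "Bt a h \<noteq> 0"
    then have h: "h \<in> W" by (simp add: Bt_def split: if_splits)
    then have w: "\<phi> h \<in> V2" by (rule phiV2)
    have Mw: "M a (\<phi> h) \<noteq> 0" using nz h by (simp add: Bt_def)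
    have aG: "a \<in> verts G" "a \<notin> V2" using a V1G Vdisj by auto
    have "a \<noteq> \<phi> h" using aG w by auto
    then have "adj G a (\<phi> h)" using Madj[OF aG(1) _ \<open>a \<noteq> \<phi> h\<close>] w V2G Mw by auto
    then have "a \<in> vertex_boundary G V2" using aG w unfolding vertex_boundary_def by blast
    then show False using a Xdef by simp
  qed
  have finX: "finite X" using XV1 finV1 finite_subset by auto
  obtain U where U: "orthogonal_on Hs U" "conj_diag Hs U d \<in> S(H)"
    and Unz: "\<forall>y\<in>ya ` X. \<forall>i\<in>Hs. mat_vec Hs U y i \<noteq> 0"
    using Yprop[of "ya ` X"] finX yout Xnz by auto
  define G' where "G' = partial_join (induced G V1) X H"
  define Z where "Z = Inl ` V1 \<union> Inr ` Hs"
  have vG': "verts G' = Z"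
    using V1G by (auto simp: G'_def Z_def partial_join_def verts_def induced_def Hs_def)
  have adjG': "adj G' (Inl a) (Inl b) = (a \<in> V1 \<and> b \<in> V1 \<and> adj G a b)"
    "adj G' (Inl a) (Inr h) = (a \<in> X \<and> a \<in> verts G \<and> a \<in> V1 \<and> h \<in> Hs)"
    "adj G' (Inr h) (Inl a) = (a \<in> X \<and> a \<in> verts G \<and> a \<in> V1 \<and> h \<in> Hs)"
    "adj G' (Inr h) (Inr h') = adj H h h'" for a b h h'
    by (auto simp: G'_def partial_join_def verts_def adj_def induced_def Hs_def)
  define K where "K = conj_diag Hs U d"
  have KS: "K \<in> S(H)" using U(2) by (simp add: K_def)
  have Kout: "K h h' = 0" if "h \<notin> Hs \<or> h' \<notin> Hs" for h h' using that by (auto simp: K_def conj_diag_def)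
  have Ksym: "K h h' = K h' h" for h h'
  proof (cases "h \<in> Hs \<and> h' \<in> Hs")
    case True then show ?thesis using KS by (simp add: S_set_def Hs_def)
  next
    case False
    then have "h \<notin> Hs \<or> h' \<notin> Hs" "h' \<notin> Hs \<or> h \<notin> Hs" by auto
    then show ?thesis using Kout by metis
  qed
  have Kadj: "(K h h' \<noteq> 0) = adj H h h'" if "h \<in> Hs" "h' \<in> Hs" "h \<noteq> h'" for h h'
  proof -
    have Sall: "\<forall>i\<in>verts H. \<forall>j\<in>verts H. i \<noteq> j \<longrightarrow> (K i j \<noteq> 0) = adj H i j"
      using KS unfolding S_set_def by simp
    show ?thesis using Sall that unfolding Hs_def by blast
  qed
  define mv where "mv = (\<lambda>a h. mat_vec Hs U (ya a) h)"
  have mvX: "(mv a h \<noteq> 0) = (a \<in> X)" if "a \<in> V1" "h \<in> Hs" for a h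
  proof (cases "a \<in> X")
    case True then show ?thesis using Unz that by (simp add: mv_def)
  next
    case False
    then have "ya a k = 0" for k using notX[OF that(1) False] by (simp add: ya_def)
    then show ?thesis using False by (simp add: mv_def mat_vec_def)
  qed
  define N where "N = (\<lambda>z z'. case (z, z') of (Inl a, Inl b) \<Rightarrow> if a \<in> V1 \<and> b \<in> V1 then M a b else 0
     | (Inl a, Inr h) \<Rightarrow> if a \<in> V1 \<and> h \<in> Hs then mv a h else 0
     | (Inr h, Inl a) \<Rightarrow> if a \<in> V1 \<and> h \<in> Hs then mv a h else 0
     | (Inr h, Inr h') \<Rightarrow> K h h')"
  have Nsimps: "N (Inl a) (Inl b) = (if a \<in> V1 \<and> b \<in> V1 then M a b else 0)"
    "N (Inl a) (Inr h) = (if a \<in> V1 \<and> h \<in> Hs then mv a h else 0)"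
    "N (Inr h) (Inl a) = (if a \<in> V1 \<and> h \<in> Hs then mv a h else 0)"
    "N (Inr h) (Inr h') = K h h'" for a b h h' by (simp_all add: N_def)
  have NS: "N \<in> S(G')"
  proof -
    have 1: "N z z' = 0" if "z \<notin> Z \<or> z' \<notin> Z" for z z'
      using that by (cases z; cases z') (auto simp: Nsimps Z_def intro!: Kout)
    have 2: "N z z' = N z' z" if "z \<in> Z" "z' \<in> Z" for z z'
      using that by (cases z; cases z') (auto simp: Nsimps Msym Ksym)
    have 3: "(N z z' \<noteq> 0) = adj G' z z'" if "z \<in> Z" "z' \<in> Z" "z \<noteq> z'" for z z'
    proof (cases z; cases z')
      fix a b assume zz: "z = Inl a" "z' = Inl b"
      then have "a \<in> V1" "b \<in> V1" "a \<noteq> b" using that by (auto simp: Z_def)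
      then show ?thesis using zz Madj V1G by (auto simp: Nsimps adjG')
    next
      fix a h assume zz: "z = Inl a" "z' = Inr h"
      then have "a \<in> V1" "h \<in> Hs" using that by (auto simp: Z_def)
      then show ?thesis using zz mvX V1G by (auto simp: Nsimps adjG')
    next
      fix h a assume zz: "z = Inr h" "z' = Inl a"
      then have "a \<in> V1" "h \<in> Hs" using that by (auto simp: Z_def)
      then show ?thesis using zz mvX V1G by (auto simp: Nsimps adjG')
    next
      fix h h' assume zz: "z = Inr h" "z' = Inr h'"
      then have "h \<in> Hs" "h' \<in> Hs" "h \<noteq> h'" using that by (auto simp: Z_def)
      then show ?thesis using zz Kadj by (simp add: Nsimps adjG')
    qed
    show ?thesis unfolding S_set_def vG' using 1 2 3 by blast
  qed
  define N0 where "N0 = (\<lambda>z z'. case (z, z') of (Inl a, Inl b) \<Rightarrow> if a \<in> V1 \<and> b \<in> V1 then M a b else 0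
     | (Inl a, Inr h) \<Rightarrow> if a \<in> V1 \<and> h \<in> Hs then ya a h else 0
     | (Inr h, Inl a) \<Rightarrow> if a \<in> V1 \<and> h \<in> Hs then ya a h else 0
     | (Inr h, Inr h') \<Rightarrow> dg Hs d h h')"
  have N0simps: "N0 (Inl a) (Inl b) = (if a \<in> V1 \<and> b \<in> V1 then M a b else 0)"
    "N0 (Inl a) (Inr h) = (if a \<in> V1 \<and> h \<in> Hs then ya a h else 0)"
    "N0 (Inr h) (Inl a) = (if a \<in> V1 \<and> h \<in> Hs then ya a h else 0)"
    "N0 (Inr h) (Inr h') = dg Hs d h h'" for a b h h' by (simp_all add: N0_def)
  define Mt where "Mt = (\<lambda>z z'. case (z, z') of (Inl a, Inl b) \<Rightarrow> if a \<in> V1 \<and> b \<in> V1 then M a b else 0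
     | (Inl a, Inr h) \<Rightarrow> if a \<in> V1 \<and> h \<in> Hs then Bt a h else 0
     | (Inr h, Inl a) \<Rightarrow> if a \<in> V1 \<and> h \<in> Hs then Bt a h else 0
     | (Inr h, Inr h') \<Rightarrow> Mh h h')"
  have Mtsimps: "Mt (Inl a) (Inl b) = (if a \<in> V1 \<and> b \<in> V1 then M a b else 0)"
    "Mt (Inl a) (Inr h) = (if a \<in> V1 \<and> h \<in> Hs then Bt a h else 0)"
    "Mt (Inr h) (Inl a) = (if a \<in> V1 \<and> h \<in> Hs then Bt a h else 0)"
    "Mt (Inr h) (Inr h') = Mh h h'" for a b h h' by (simp_all add: Mt_def)
  define T1 where "T1 = bd V1 Hs U"
  define T2 where "T2 = bd V1 Hs (tp Qh)"
  have Nout: "N z z' = 0" if "z \<notin> Z \<or> z' \<notin> Z" for z z'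
    using that by (cases z; cases z') (auto simp: Nsimps Z_def intro!: Kout)
  have N0out: "N0 z z' = 0" if "z \<notin> Z \<or> z' \<notin> Z" for z z'
    using that by (cases z; cases z') (auto simp: N0simps Z_def dg_def)
  note bc1 = bd_conj[OF finV1 finH, folded Z_def, of _ _ U, folded T1_def]
  note bc2 = bd_conj[OF finV1 finH, folded Z_def, of _ _ "tp Qh", folded T2_def]
  have claimA: "N = mm Z (mm Z T1 N0) (tp T1)"
  proof (rule ext, rule ext)
    fix z z'
    show "N z z' = mm Z (mm Z T1 N0) (tp T1) z z'"
    proof (cases "z \<in> Z \<and> z' \<in> Z")
      case False then show ?thesis using Nout by (auto simp: mm_def)
    next
      case True
      show ?thesis
      proof (cases z; cases z')
        fix a b assume zz: "z = Inl a" "z' = Inl b"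
        then have "a \<in> V1" "b \<in> V1" using True by (auto simp: Z_def)
        then show ?thesis using zz by (simp add: bc1 Nsimps N0simps)
      next
        fix a h assume zz: "z = Inl a" "z' = Inr h"
        then have "a \<in> V1" "h \<in> Hs" using True by (auto simp: Z_def)
        then show ?thesis using zz by (simp add: bc1 Nsimps N0simps mv_def mat_vec_def cong: sum.cong)
      next
        fix h a assume zz: "z = Inr h" "z' = Inl a"
        then have "a \<in> V1" "h \<in> Hs" using True by (auto simp: Z_def)
        then show ?thesis using zz by (simp add: bc1 Nsimps N0simps mv_def mat_vec_def cong: sum.cong)
      next
        fix h h' assume zz: "z = Inr h" "z' = Inr h'"
        then have hh: "h \<in> Hs" "h' \<in> Hs" using True by (auto simp: Z_def)
        have "(\<Sum>k'\<in>Hs. U h' k' * (\<Sum>k\<in>Hs. U h k * dg Hs d k k')) = (\<Sum>k'\<in>Hs. U h' k' * (U h k' * d k'))"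
        proof (intro sum.cong refl)
          fix k' assume k': "k' \<in> Hs"
          have "(\<Sum>k\<in>Hs. U h k * dg Hs d k k') = U h k' * d k'"
            using k' finH by (simp add: dg_def if_distrib[of "\<lambda>x. _ * x"] cong: if_cong)
          then show "U h' k' * (\<Sum>k\<in>Hs. U h k * dg Hs d k k') = U h' k' * (U h k' * d k')" by simp
        qed
        also have "\<dots> = K h h'" using hh by (simp add: K_def conj_diag_def algebra_simps)
        finally show ?thesis using zz hh by (simp add: bc1 Nsimps N0simps)
      qed
    qed
  qed
  have claimB: "N0 = mm Z (mm Z T2 Mt) (tp T2)"
  proof (rule ext, rule ext)
    fix z z'
    show "N0 z z' = mm Z (mm Z T2 Mt) (tp T2) z z'"
    proof (cases "z \<in> Z \<and> z' \<in> Z")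
      case False then show ?thesis using N0out by (auto simp: mm_def)
    next
      case True
      show ?thesis
      proof (cases z; cases z')
        fix a b assume zz: "z = Inl a" "z' = Inl b"
        then have "a \<in> V1" "b \<in> V1" using True by (auto simp: Z_def)
        then show ?thesis using zz by (simp add: bc2 N0simps Mtsimps)
      next
        fix a h assume zz: "z = Inl a" "z' = Inr h"
        then have ah: "a \<in> V1" "h \<in> Hs" using True by (auto simp: Z_def)
        have "mm Z (mm Z T2 Mt) (tp T2) (Inl a) (Inr h) = (\<Sum>k\<in>Hs. tp Qh h k * Mt (Inl a) (Inr k))"
          by (rule bc2(2)[OF ah])
        then show ?thesis using zz ah by (simp add: N0simps Mtsimps ya_def tp_def mult.commute cong: sum.cong)
      next
        fix h a assume zz: "z = Inr h" "z' = Inl a"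
        then have ah: "a \<in> V1" "h \<in> Hs" using True by (auto simp: Z_def)
        have "mm Z (mm Z T2 Mt) (tp T2) (Inr h) (Inl a) = (\<Sum>k\<in>Hs. tp Qh h k * Mt (Inr k) (Inl a))"
          by (rule bc2(3)[OF ah])
        then show ?thesis using zz ah by (simp add: N0simps Mtsimps ya_def tp_def mult.commute cong: sum.cong)
      next
        fix h h' assume zz: "z = Inr h" "z' = Inr h'"
        then have hh: "h \<in> Hs" "h' \<in> Hs" using True by (auto simp: Z_def)
        have "dg Hs d h h' = mm Hs (mm Hs (tp Qh) Mh) Qh h h'" using D_dec by simp
        also have "\<dots> = (\<Sum>k'\<in>Hs. (\<Sum>k\<in>Hs. Qh k h * Mh k k') * Qh k' h')"
          using hh by (simp add: mm_def tp_def)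
        also have "\<dots> = (\<Sum>k'\<in>Hs. tp Qh h' k' * (\<Sum>k\<in>Hs. tp Qh h k * Mt (Inr k) (Inr k')))"
          by (simp add: tp_def Mtsimps mult.commute)
        finally show ?thesis using zz hh by (simp add: bc2 N0simps)
      qed
    qed
  qed
  have orthT1: "mm Z T1 (tp T1) = idm Z"
    unfolding T1_def Z_def by (rule bd_orth[OF finV1 finH]) (use U(1) in \<open>simp add: orthogonal_on_iff\<close>)
  have orthT2: "mm Z T2 (tp T2) = idm Z"
    unfolding T2_def Z_def by (rule bd_orth[OF finV1 finH]) (simp add: Qh_orth2)
  have finZ: "finite Z" using finV1 finH by (simp add: Z_def)
  have cpN: "charpoly Z N = charpoly Z Mt"
    unfolding claimA charpoly_orth_sim[OF finZ orthT1] claimB charpoly_orth_sim[OF finZ orthT2] ..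
  define Z1 where "Z1 = Inl ` V1 \<union> Inr ` W"
  define Z2 :: "('a + 'b) set" where "Z2 = Inr ` E"
  have ZZ: "Z = Z1 \<union> Z2" unfolding Z_def Z1_def Z2_def HWE by auto
  have finZ1: "finite Z1" and finZ2: "finite Z2" using finV1 finW finE by (auto simp: Z1_def Z2_def)
  have Zdisj: "Z1 \<inter> Z2 = {}" using WE by (auto simp: Z1_def Z2_def)
  have Zcross: "Mt z z' = 0 \<and> Mt z' z = 0" if zz: "z \<in> Z1" "z' \<in> Z2" for z z'
  proof -
    obtain h where h: "z' = Inr h" "h \<in> E" using zz(2) by (auto simp: Z2_def)
    have hW: "h \<notin> W" using h WE by auto
    show ?thesis
    proof (cases z)
      case (Inl a) then show ?thesis using h hW by (simp add: Mtsimps Bt_def)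
    next
      case (Inr w)
      then have "w \<in> W" using zz(1) by (auto simp: Z1_def)
      then have "w \<notin> E" using WE by auto
      then show ?thesis using Inr h hW by (auto simp: Mtsimps Mh_def)
    qed
  qed
  have cpZ: "charpoly Z Mt = charpoly Z1 Mt * charpoly Z2 Mt"
    unfolding ZZ by (rule charpoly_block[OF finZ1 finZ2 Zdisj Zcross])
  define g where "g = (\<lambda>z. case z of Inl a \<Rightarrow> a | Inr h \<Rightarrow> \<phi> h)"
  have bg1: "bij_betw g (Inl ` V1) V1"
    by (rule bij_betw_byWitness[where f'=Inl]) (auto simp: g_def)
  have psiphi: "\<And>w. w \<in> W \<Longrightarrow> \<psi> (\<phi> w) = w" unfolding \<phi>_def W_def by (simp add: f_inv_into_f)
  have bg2: "bij_betw g (Inr ` W) V2"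
    by (rule bij_betw_byWitness[where f'="\<lambda>v. Inr (\<psi> v)"])
       (auto simp: g_def phipsi psiphi phiV2 W_def)
  have bg: "bij_betw g Z1 (verts G)"
    unfolding Z1_def VV[symmetric] by (rule bij_betw_combine[OF bg1 bg2 Vdisj])
  have cp1: "charpoly Z1 Mt = charpoly (verts G) M"
  proof -
    have "charpoly Z1 Mt = charpoly Z1 (\<lambda>i j. M (g i) (g j))"
    proof (rule charpoly_cong)
      fix z z' assume zz: "z \<in> Z1" "z' \<in> Z1"
      show "Mt z z' = M (g z) (g z')"
      proof (cases z; cases z')
        fix a b assume "z = Inl a" "z' = Inl b"
        then show ?thesis using zz by (auto simp: Mtsimps g_def Z1_def)
      next
        fix a w assume a: "z = Inl a" "z' = Inr w"
        then have "a \<in> V1" "w \<in> W" using zz by (auto simp: Z1_def)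
        then show ?thesis using a WH by (auto simp: Mtsimps g_def Bt_def)
      next
        fix w a assume a: "z = Inr w" "z' = Inl a"
        then have "a \<in> V1" "w \<in> W" using zz by (auto simp: Z1_def)
        then show ?thesis using a WH by (auto simp: Mtsimps g_def Bt_def Msym)
      next
        fix w w' assume a: "z = Inr w" "z' = Inr w'"
        then have "w \<in> W" "w' \<in> W" using zz by (auto simp: Z1_def)
        then show ?thesis using a by (auto simp: Mtsimps g_def Mh_def)
      qed
    qed
    also have "\<dots> = charpoly (verts G) M" by (rule charpoly_reindex[OF bg finZ1])
    finally show ?thesis .
  qed
  have cp2: "charpoly Z2 Mt = (\<Prod>h\<in>E. [:- e h, 1:])"
  proof -
    have bi: "bij_betw Inr E Z2" by (simp add: Z2_def bij_betw_def)
    have "charpoly Z2 Mt = charpoly E (\<lambda>i j. Mt (Inr i) (Inr j))"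
      by (rule charpoly_reindex[OF bi finE, symmetric])
    also have "\<dots> = charpoly E (dg E e)"
    proof (rule charpoly_cong)
      fix i j assume ij: "i \<in> E" "j \<in> E"
      then have "i \<notin> W" "j \<notin> W" "i \<in> Hs" "j \<in> Hs" using WE HWE by auto
      then show "Mt (Inr i) (Inr j) = dg E e i j" using ij by (simp add: Mtsimps Mh_def dg_def)
    qed
    also have "\<dots> = (\<Prod>h\<in>E. [:- e h, 1:])" by (rule charpoly_dg[OF finE])
    finally show ?thesis .
  qed
  have "spectrum (verts G') N = proots (charpoly (verts G) M * (\<Prod>h\<in>E. [:- e h, 1:]))"
    unfolding spectrum_def vG' cpN cpZ cp1 cp2 ..
  also have "\<dots> = spectrum (verts G) M + \<sigma>'"
    unfolding spectrum_def
    using proots_mult[OF charpoly_nonzero[OF finG, of M], of "\<Prod>h\<in>E. [:- e h, 1:]"]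
      proots_lin_prod[OF finE, of e] e finE by simp
  finally show ?thesis using NS unfolding G'_def by blast
qed

end
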